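(* Let $k$ be an infinite field, let $\sigma\colon\Gamma\to2^V$ be a quasi-geometric homology triangulation of a simplex, and let $E$ be a face of $\Gamma$. Then there is a special l.s.o.p. for $k[\mathrm{lk}_\Gamma(E)]$.
   Context: Homology is with coefficients in $k$. A $d$-dimensional simplicial complex $\Gamma$ with trivial reduced homology is a homology ball of dimension $d$ if there is a subcomplex $\partial\Gamma$ such that $\partial\Gamma$ is a homology sphere of dimension $d-1$, $\mathrm{lk}_\Gamma(F)$ is a homology sphere of dimension $d-|F|$ for $F\notin\partial\Gamma$, and $\mathrm{lk}_\Gamma(F)$ is a homology ball of dimension $d-|F|$ for nonempty $F\in\partial\Gamma$; its interior faces are those not in $\partial\Gamma$. A homology triangulation of $2^V$ is a finite simplicial complex $\Gamma$ with $\sigma\colon\Gamma\to2^V$ such that for every nonempty $U\subset V$, $\Gamma_U:=\sigma^{-1}(2^U)$ is a homology ball of dimension $|U|-1$ whose interior faces are exactly $\sigma^{-1}(U)$. $\sigma(F)$ is the carrier; $\sigma(w)=\sigma(\{w\})$. It is quasi-geometric if there is no face $F$ and $U\subset V$ with $\dim\Gamma_U<\dim F$ and $\sigma(w)\subset U$ for all vertices $w\in F$. $k[\Delta]$ is the face ring (variables $x_w$, $x^F=\prod_{w\in F}x_w$), graded by degree; the support of $\sum a_wx_w$ is $\{w:a_w\ne0\}$. An l.s.o.p. for a finitely generated graded $k$-algebra of Krull dimension $d$ is a sequence of $d$ degree-one elements with finite-dimensional quotient. For a face $E$, an l.s.o.p. $\theta_1,\ldots,\theta_d$ of $k[\mathrm{lk}_\Gamma(E)]$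 ($d=|V|-|E|$) is special if for each $v\in V\smallsetminus\sigma(E)$ there is an element $\theta_v$ of it whose support consists of vertices $w$ of $\mathrm{lk}_\Gamma(E)$ with $v\in\sigma(w)$, with $\theta_v\ne\theta_{v'}$ for $v\ne v'$. *)

theory Defs
  imports Main "HOL-Library.Poly_Mapping"
begin

(* A (finite) simplicial complex on vertex type 'w is a finite family of finite sets
   closed under taking subsets. The void complex {} is allowed; {{}} is the (-1)-sphere. *)
definition simplicial_complex :: "'w set set \<Rightarrow> bool" where
  "simplicial_complex \<Delta> \<longleftrightarrow> finite \<Delta> \<and> (\<forall>F\<in>\<Delta>. finite F) \<and> (\<forall>F\<in>\<Delta>. \<forall>G. G \<subseteq> F \<longrightarrow> G \<in> \<Delta>)"

definition has_dim :: "'w set set \<Rightarrow> int \<Rightarrow> bool" where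
  "has_dim \<Delta> d \<longleftrightarrow> (\<exists>F\<in>\<Delta>. int (card F) = d + 1) \<and> (\<forall>F\<in>\<Delta>. int (card F) \<le> d + 1)"

(* dimension as a number (with dim {} = dim {{}} = -1) *)
definition sc_dim :: "'w set set \<Rightarrow> int" where
  "sc_dim \<Delta> = int (Max (insert 0 (card ` \<Delta>))) - 1"

definition link :: "'w set set \<Rightarrow> 'w set \<Rightarrow> 'w set set" where
  "link \<Delta> F = {G \<in> \<Delta>. G \<inter> F = {} \<and> G \<union> F \<in> \<Delta>}"

definition vertices :: "'w set set \<Rightarrow> 'w set" where
  "vertices \<Delta> = \<Union>\<Delta>"

(* Chains of faces of cardinality n (i.e. of dimension n-1), as coefficient functions. *)
definition chains :: "'w set set \<Rightarrow> nat \<Rightarrow> ('w set \<Rightarrow> 'k::field) set" where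
  "chains \<Delta> n = {c. \<forall>G. c G \<noteq> 0 \<longrightarrow> G \<in> \<Delta> \<and> card G = n}"

(* Augmented simplicial boundary, using the vertex order for orientations:
   (bd c)(G) = sum over faces H = G + v of [H : G] c(H), with [H:G] = (-1)^(#{u in G. u < v}). *)
definition bd :: "'w::linorder set set \<Rightarrow> ('w set \<Rightarrow> 'k::field) \<Rightarrow> 'w set \<Rightarrow> 'k" where
  "bd \<Delta> c G = (if G \<in> \<Delta> then
      (\<Sum>v\<in>{v. v \<notin> G \<and> insert v G \<in> \<Delta>}. (-1) ^ card {u\<in>G. u < v} * c (insert v G))
    else 0)"

definition cycles :: "'w::linorder set set \<Rightarrow> nat \<Rightarrow> ('w set \<Rightarrow> 'k::field) set" where
  "cycles \<Delta> n = {c \<in> chains \<Delta> n. bd \<Delta> c = (\<lambda>_. 0)}"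

definition boundaries :: "'w::linorder set set \<Rightarrow> nat \<Rightarrow> ('w set \<Rightarrow> 'k::field) set" where
  "boundaries \<Delta> n = bd \<Delta> ` chains \<Delta> (Suc n)"

(* reduced homology in dimension n-1 (faces of cardinality n) vanishes *)
definition hom_vanishes :: "'k::field itself \<Rightarrow> 'w::linorder set set \<Rightarrow> nat \<Rightarrow> bool" where
  "hom_vanishes _ \<Delta> n \<longleftrightarrow> (cycles \<Delta> n :: ('w set \<Rightarrow> 'k) set) \<subseteq> boundaries \<Delta> n"

(* reduced homology in dimension n-1 is one-dimensional, i.e. isomorphic to k *)
definition hom_is_k :: "'k::field itself \<Rightarrow> 'w::linorder set set \<Rightarrow> nat \<Rightarrow> bool" where
  "hom_is_k _ \<Delta> n \<longleftrightarrow> (\<exists>z::'w set \<Rightarrow> 'k. z \<in> cycles \<Delta> n \<and> z \<notin> boundaries \<Delta> n \<and>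
      (\<forall>c\<in>cycles \<Delta> n. \<exists>a. \<exists>b\<in>boundaries \<Delta> n. c = (\<lambda>G. a * z G + b G)))"

definition acyclic :: "'k::field itself \<Rightarrow> 'w::linorder set set \<Rightarrow> bool" where
  "acyclic K \<Delta> \<longleftrightarrow> (\<forall>n. hom_vanishes K \<Delta> n)"

(* homology sphere of dimension d: for every face F (including the empty face), the link of F
   has the reduced homology of a (d-|F|)-sphere. *)
definition hsphere :: "'k::field itself \<Rightarrow> int \<Rightarrow> 'w::linorder set set \<Rightarrow> bool" where
  "hsphere K d \<Delta> \<longleftrightarrow> simplicial_complex \<Delta> \<and> has_dim \<Delta> d \<and>
     (\<forall>F\<in>\<Delta>. \<forall>n::nat.
        (int n = d - int (card F) + 1 \<longrightarrow> hom_is_k K (link \<Delta> F) n) \<and>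
        (int n \<noteq> d - int (card F) + 1 \<longrightarrow> hom_vanishes K (link \<Delta> F) n))"

(* hball_bd K d \<Gamma> B: \<Gamma> is a homology ball of dimension d with boundary subcomplex B *)
inductive hball_bd :: "'k::field itself \<Rightarrow> int \<Rightarrow> 'w::linorder set set \<Rightarrow> 'w set set \<Rightarrow> bool"
  for K :: "'k::field itself" where
  "\<lbrakk> simplicial_complex \<Gamma>; has_dim \<Gamma> d; acyclic K \<Gamma>;
     B \<subseteq> \<Gamma>; simplicial_complex B; hsphere K (d - 1) B;
     \<forall>F\<in>\<Gamma>. F \<notin> B \<longrightarrow> hsphere K (d - int (card F)) (link \<Gamma> F);
     \<forall>F\<in>B. F \<noteq> {} \<longrightarrow> (\<exists>B'. hball_bd K (d - int (card F)) (link \<Gamma> F) B') \<rbrakk>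
   \<Longrightarrow> hball_bd K d \<Gamma> B"

definition restr :: "'w set set \<Rightarrow> ('w set \<Rightarrow> 'v set) \<Rightarrow> 'v set \<Rightarrow> 'w set set" where
  "restr \<Gamma> \<sigma> U = {F \<in> \<Gamma>. \<sigma> F \<subseteq> U}"

definition homology_triangulation ::
  "'k::field itself \<Rightarrow> 'w::linorder set set \<Rightarrow> ('w set \<Rightarrow> 'v set) \<Rightarrow> 'v set \<Rightarrow> bool" where
  "homology_triangulation K \<Gamma> \<sigma> V \<longleftrightarrow> finite V \<and> simplicial_complex \<Gamma> \<and> (\<forall>F\<in>\<Gamma>. \<sigma> F \<subseteq> V) \<and>
     (\<forall>U. U \<subseteq> V \<and> U \<noteq> {} \<longrightarrow>
        (\<exists>B. hball_bd K (int (card U) - 1) (restr \<Gamma> \<sigma> U) B \<and>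
             restr \<Gamma> \<sigma> U - B = {F \<in> \<Gamma>. \<sigma> F = U}))"

definition quasi_geometric :: "'w set set \<Rightarrow> ('w set \<Rightarrow> 'v set) \<Rightarrow> 'v set \<Rightarrow> bool" where
  "quasi_geometric \<Gamma> \<sigma> V \<longleftrightarrow>
     \<not> (\<exists>F\<in>\<Gamma>. \<exists>U. U \<subseteq> V \<and> sc_dim (restr \<Gamma> \<sigma> U) < int (card F) - 1 \<and> (\<forall>w\<in>F. \<sigma> {w} \<subseteq> U))"

(* polynomials over 'k in variables x_w, w \<in> W: monomials are 'w \<Rightarrow>\<^sub>0 nat *)
type_synonym ('w, 'k) mpoly = "('w \<Rightarrow>\<^sub>0 nat) \<Rightarrow>\<^sub>0 'k"

definition polys :: "'w set \<Rightarrow> ('w, 'k::comm_ring_1) mpoly set" where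
  "polys W = {p. \<forall>m. m \<in> Poly_Mapping.keys p \<longrightarrow> Poly_Mapping.keys m \<subseteq> W}"

definition const_poly :: "'k::comm_ring_1 \<Rightarrow> ('w, 'k) mpoly" where
  "const_poly a = Poly_Mapping.single 0 a"

definition xmon :: "'w set \<Rightarrow> ('w, 'k::comm_ring_1) mpoly" where
  "xmon F = Poly_Mapping.single (\<Sum>w\<in>F. Poly_Mapping.single w 1) 1"

definition lin_form :: "'w set \<Rightarrow> ('w \<Rightarrow> 'k::comm_ring_1) \<Rightarrow> ('w, 'k) mpoly" where
  "lin_form W a = (\<Sum>w\<in>W. Poly_Mapping.single (Poly_Mapping.single w 1) (a w))"

definition ideal_gen :: "('w, 'k::comm_ring_1) mpoly set \<Rightarrow> ('w, 'k) mpoly set \<Rightarrow> ('w, 'k) mpoly set" where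
  "ideal_gen R G = {\<Sum>g\<in>G'. h g * g | G' h. finite G' \<and> G' \<subseteq> G \<and> (\<forall>g\<in>G'. h g \<in> R)}"

(* degree-one elements of k[\<Delta>] are given by coefficient vectors a on the vertices;
   lsop \<Delta> \<theta>s: \<theta>s is a sequence of degree-one elements whose quotient
   k[\<Delta>]/(\<theta>s) is finite-dimensional over k (i.e. spanned by finitely many classes). *)
definition finite_quotient :: "'w set set \<Rightarrow> ('w \<Rightarrow> 'k::field) list \<Rightarrow> bool" where
  "finite_quotient \<Delta> \<theta>s \<longleftrightarrow>
     (\<exists>S. finite S \<and> S \<subseteq> polys (vertices \<Delta>) \<and>
        (\<forall>p\<in>polys (vertices \<Delta>). \<exists>c::('w, 'k) mpoly \<Rightarrow> 'k.
           p - (\<Sum>s\<in>S. const_poly (c s) * s) \<in>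
             ideal_gen (polys (vertices \<Delta>))
               ({xmon F | F. F \<subseteq> vertices \<Delta> \<and> F \<notin> \<Delta>} \<union> lin_form (vertices \<Delta>) ` set \<theta>s)))"

definition lsop :: "nat \<Rightarrow> 'w set set \<Rightarrow> ('w \<Rightarrow> 'k::field) list \<Rightarrow> bool" where
  "lsop d \<Delta> \<theta>s \<longleftrightarrow> length \<theta>s = d \<and>
     (\<forall>\<theta>\<in>set \<theta>s. \<forall>w. w \<notin> vertices \<Delta> \<longrightarrow> \<theta> w = 0) \<and>
     finite_quotient \<Delta> \<theta>s"

definition supp :: "('w \<Rightarrow> 'k::zero) \<Rightarrow> 'w set" where
  "supp a = {w. a w \<noteq> 0}"

definition special_lsop ::
  "'w set set \<Rightarrow> ('w set \<Rightarrow> 'v set) \<Rightarrow> 'v set \<Rightarrow> 'w set \<Rightarrow> ('w \<Rightarrow> 'k::field) list \<Rightarrow> bool" where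
  "special_lsop \<Gamma> \<sigma> V E \<theta>s \<longleftrightarrow>
     lsop (card V - card E) (link \<Gamma> E) \<theta>s \<and>
     (\<exists>\<theta>v :: 'v \<Rightarrow> ('w \<Rightarrow> 'k).
        (\<forall>v\<in>V - \<sigma> E. \<theta>v v \<in> set \<theta>s \<and>
            supp (\<theta>v v) \<subseteq> {w \<in> vertices (link \<Gamma> E). v \<in> \<sigma> {w}}) \<and>
        inj_on \<theta>v (V - \<sigma> E))"

end

theory Submission
  imports Defs
begin

lemma single_sum_pm: "Poly_Mapping.single k (sum f A) = (\<Sum>x\<in>A. Poly_Mapping.single k (f x))"
  by (rule poly_mapping_eqI) (simp add: lookup_sum lookup_single when_def sum.neutral)

lemma keys_add_nat: "Poly_Mapping.keys ((a::'w \<Rightarrow>\<^sub>0 nat) + b) = Poly_Mapping.keys a \<union> Poly_Mapping.keys b"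
  by (auto simp: in_keys_iff lookup_add)

lemma polys_add: assumes "p \<in> polys W" "q \<in> polys W" shows "p + q \<in> polys W"
  using assms keys_add[of p q] unfolding polys_def by auto

lemma polys_uminus: "p \<in> polys W \<Longrightarrow> - p \<in> polys W"
  unfolding polys_def by (simp add: in_keys_iff)

lemma polys_mult: 
  assumes "p \<in> polys W" "q \<in> polys W" shows "p * q \<in> polys W"
  unfolding polys_def
proof (intro CollectI allI impI)
  fix m assume "m \<in> Poly_Mapping.keys (p * q)"
  then obtain a b where "m = a + b" "a \<in> Poly_Mapping.keys p" "b \<in> Poly_Mapping.keys q"
    using keys_mult[of p q] by blast
  then show "Poly_Mapping.keys m \<subseteq> W" using assms unfolding polys_def by (simp add: keys_add_nat)
qed

lemma polys_single: "Poly_Mapping.keys m \<subseteq> W \<Longrightarrow> Poly_Mapping.single m a \<in> polys W"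
  unfolding polys_def by simp

lemma polys_zero: "0 \<in> polys W"
  unfolding polys_def by simp

lemma polys_const: "const_poly a \<in> polys W"
  unfolding polys_def const_poly_def by simp

lemma ideal_genI: "x = (\<Sum>g\<in>G'. h g * g) \<Longrightarrow> finite G' \<Longrightarrow> G' \<subseteq> G \<Longrightarrow> (\<forall>g\<in>G'. h g \<in> R) \<Longrightarrow> x \<in> ideal_gen R G"
  unfolding ideal_gen_def by blast

lemma ideal_gen_gen: "g \<in> G \<Longrightarrow> r \<in> R \<Longrightarrow> r * g \<in> ideal_gen R G"
  unfolding ideal_gen_def
  by (rule CollectI, rule exI[of _ "{g}"], rule exI[of _ "\<lambda>_. r"]) simp

lemma ideal_gen_zero: "ideal_gen R G \<noteq> {} \<Longrightarrow> (0::('w,'k::comm_ring_1) mpoly) \<in> ideal_gen R G"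
  unfolding ideal_gen_def by (rule CollectI, rule exI[of _ "{}"]) auto

lemma ideal_zero: "(0::('w,'k::comm_ring_1) mpoly) \<in> ideal_gen (polys W) G"
  unfolding ideal_gen_def by (rule CollectI, rule exI[of _ "{}"]) auto

lemma ideal_add:
  assumes "x \<in> ideal_gen (polys W) G" "y \<in> ideal_gen (polys W) G"
  shows "x + y \<in> ideal_gen (polys W) G"
proof -
  obtain G1 h1 where 1: "x = (\<Sum>g\<in>G1. h1 g * g)" "finite G1" "G1 \<subseteq> G" "\<forall>g\<in>G1. h1 g \<in> polys W"
    using assms(1) unfolding ideal_gen_def by blast
  obtain G2 h2 where 2: "y = (\<Sum>g\<in>G2. h2 g * g)" "finite G2" "G2 \<subseteq> G" "\<forall>g\<in>G2. h2 g \<in> polys W"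
    using assms(2) unfolding ideal_gen_def by blast
  define h where "h g = (if g \<in> G1 then h1 g else 0) + (if g \<in> G2 then h2 g else 0)" for g
  have "(\<Sum>g\<in>G1 \<union> G2. h g * g) = (\<Sum>g\<in>G1 \<union> G2. (if g \<in> G1 then h1 g * g else 0)) + (\<Sum>g\<in>G1 \<union> G2. (if g \<in> G2 then h2 g * g else 0))"
  proof -
    have "\<And>g. h g * g = (if g \<in> G1 then h1 g * g else 0) + (if g \<in> G2 then h2 g * g else 0)"
      unfolding h_def by (simp add: distrib_right)
    then show ?thesis by (simp add: sum.distrib)
  qed
  also have "\<dots> = x + y"
  proof -
    have a: "(G1 \<union> G2) \<inter> G1 = G1" "(G1 \<union> G2) \<inter> G2 = G2" by blast+
    have fin: "finite (G1 \<union> G2)" using 1 2 by simp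
    have s1: "(\<Sum>g\<in>G1 \<union> G2. if g \<in> G1 then h1 g * g else 0) = (\<Sum>g\<in>G1. h1 g * g)"
      using sum.inter_restrict[OF fin, of "\<lambda>g. h1 g * g" G1] a by simp
    have s2: "(\<Sum>g\<in>G1 \<union> G2. if g \<in> G2 then h2 g * g else 0) = (\<Sum>g\<in>G2. h2 g * g)"
      using sum.inter_restrict[OF fin, of "\<lambda>g. h2 g * g" G2] a by simp
    show ?thesis using 1 2 s1 s2 by simp
  qed
  finally have "x + y = (\<Sum>g\<in>G1 \<union> G2. h g * g)" by simp
  moreover have "\<forall>g\<in>G1 \<union> G2. h g \<in> polys W"
    using 1 2 unfolding h_def by (auto intro!: polys_add polys_zero)
  ultimately show ?thesis using 1 2 by (intro ideal_genI) auto
qed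

lemma ideal_mult:
  assumes "x \<in> ideal_gen (polys W) G" "r \<in> polys W"
  shows "r * x \<in> ideal_gen (polys W) G"
proof -
  obtain G1 h1 where 1: "x = (\<Sum>g\<in>G1. h1 g * g)" "finite G1" "G1 \<subseteq> G" "\<forall>g\<in>G1. h1 g \<in> polys W"
    using assms(1) unfolding ideal_gen_def by blast
  have "r * x = (\<Sum>g\<in>G1. (r * h1 g) * g)" using 1 by (simp add: sum_distrib_left mult.assoc)
  moreover have "\<forall>g\<in>G1. r * h1 g \<in> polys W" using 1 assms(2) by (auto intro: polys_mult)
  ultimately show ?thesis using 1 by (intro ideal_genI) auto
qed

lemma ideal_uminus:
  assumes "x \<in> ideal_gen (polys W) G"
  shows "- x \<in> ideal_gen (polys W) G"
proof -
  obtain G1 h1 where 1: "x = (\<Sum>g\<in>G1. h1 g * g)" "finite G1" "G1 \<subseteq> G" "\<forall>g\<in>G1. h1 g \<in> polys W"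
    using assms(1) unfolding ideal_gen_def by blast
  have "- x = (\<Sum>g\<in>G1. (- h1 g) * g)" using 1 by (simp add: sum_negf)
  moreover have "\<forall>g\<in>G1. - h1 g \<in> polys W" using 1 by (auto intro: polys_uminus)
  ultimately show ?thesis using 1 by (intro ideal_genI) auto
qed

lemma ideal_diff:
  "x \<in> ideal_gen (polys W) G \<Longrightarrow> y \<in> ideal_gen (polys W) G \<Longrightarrow> x - y \<in> ideal_gen (polys W) G"
  using ideal_add[OF _ ideal_uminus] by (metis diff_conv_add_uminus)

lemma ideal_sum:
  "finite A \<Longrightarrow> (\<And>a. a \<in> A \<Longrightarrow> f a \<in> ideal_gen (polys W) G) \<Longrightarrow> sum f A \<in> ideal_gen (polys W) G"
  by (induction A rule: finite_induct) (auto intro: ideal_add ideal_zero)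

definition qI :: "'w set set \<Rightarrow> ('w \<Rightarrow> 'k::field) list \<Rightarrow> ('w,'k) mpoly set" where
 "qI \<Delta> \<theta>s = ideal_gen (polys (vertices \<Delta>)) ({xmon F | F. F \<subseteq> vertices \<Delta> \<and> F \<notin> \<Delta>} \<union> lin_form (vertices \<Delta>) ` set \<theta>s)"

lemma const_single: "const_poly a * Poly_Mapping.single m b = Poly_Mapping.single m (a * b)"
  unfolding const_poly_def by (simp add: mult_single)

lemma qI_mult: "x \<in> qI \<Delta> \<theta>s \<Longrightarrow> r \<in> polys (vertices \<Delta>) \<Longrightarrow> r * x \<in> qI \<Delta> \<theta>s"
  unfolding qI_def by (rule ideal_mult)

lemma qI_single:
  assumes "Poly_Mapping.single m 1 \<in> qI \<Delta> \<theta>s"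
  shows "Poly_Mapping.single m a \<in> qI \<Delta> \<theta>s"
  using qI_mult[OF assms polys_const[of a]] by (simp add: const_single)

lemma lookup_chi: "finite K \<Longrightarrow> Poly_Mapping.lookup (\<Sum>w\<in>K. Poly_Mapping.single w (1::nat)) u = (if u \<in> K then 1 else 0)"
  by (simp add: lookup_sum lookup_single when_def)

lemma mon_nonface:
  assumes "Poly_Mapping.keys m \<subseteq> vertices \<Delta>" "Poly_Mapping.keys m \<notin> \<Delta>"
  shows "Poly_Mapping.single m (1::'k::field) \<in> qI \<Delta> (\<theta>s :: ('w \<Rightarrow> 'k) list)"
proof -
  define K where "K = Poly_Mapping.keys m"
  define \<chi> where "\<chi> = (\<Sum>w\<in>K. Poly_Mapping.single w (1::nat))"
  have lc: "Poly_Mapping.lookup \<chi> u = (if u \<in> K then 1 else 0)" for u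
    unfolding \<chi>_def K_def by (rule lookup_chi) simp
  have meq: "m = (m - \<chi>) + \<chi>"
    by (rule poly_mapping_eqI) (auto simp: lookup_add lookup_minus lc K_def in_keys_iff)
  have "Poly_Mapping.keys (m - \<chi>) \<subseteq> K"
    by (auto simp: in_keys_iff lookup_minus lc K_def)
  then have p: "Poly_Mapping.single (m - \<chi>) (1::'k) \<in> polys (vertices \<Delta>)"
    using assms(1) K_def by (intro polys_single) auto
  have g: "xmon K \<in> {xmon F | F. F \<subseteq> vertices \<Delta> \<and> F \<notin> \<Delta>} \<union> lin_form (vertices \<Delta>) ` set \<theta>s"
    using assms K_def by auto
  have "Poly_Mapping.single (m - \<chi>) (1::'k) * xmon K = Poly_Mapping.single m 1"
    unfolding xmon_def \<chi>_def[symmetric] by (simp add: mult_single meq[symmetric])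
  then show ?thesis using ideal_gen_gen[OF g p] unfolding qI_def by simp
qed

lemma lin_form_comb:
  fixes c :: "('w \<Rightarrow> 'k::field) \<Rightarrow> 'k"
  assumes "finite W" "finite T"
  shows "lin_form W (\<lambda>u. \<Sum>f\<in>T. c f * f u) = (\<Sum>f\<in>T. const_poly (c f) * lin_form W f)"
proof -
  have "lin_form W (\<lambda>u. \<Sum>f\<in>T. c f * f u) = (\<Sum>w\<in>W. \<Sum>f\<in>T. Poly_Mapping.single (Poly_Mapping.single w 1) (c f * f w))"
    unfolding lin_form_def by (simp add: single_sum_pm)
  also have "\<dots> = (\<Sum>f\<in>T. \<Sum>w\<in>W. Poly_Mapping.single (Poly_Mapping.single w 1) (c f * f w))"
    by (rule sum.swap)
  also have "\<dots> = (\<Sum>f\<in>T. const_poly (c f) * lin_form W f)"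
    unfolding lin_form_def by (simp add: sum_distrib_left const_single)
  finally show ?thesis .
qed

lemma lin_in_qI:
  assumes "finite (vertices \<Delta>)"
  shows "lin_form (vertices \<Delta>) (\<lambda>u. \<Sum>f\<in>set \<theta>s. c f * f u) \<in> qI \<Delta> \<theta>s"
proof -
  have "(\<Sum>f\<in>set \<theta>s. const_poly (c f) * lin_form (vertices \<Delta>) f) \<in> qI \<Delta> \<theta>s"
    unfolding qI_def
    by (rule ideal_sum) (auto intro!: ideal_gen_gen polys_const)
  then show ?thesis using lin_form_comb[OF assms, of "set \<theta>s" c] by simp
qed

lemma mon_high:
  fixes \<Delta> :: "'w set set" and \<theta>s :: "('w \<Rightarrow> 'k::field) list"
  assumes fin: "finite (vertices \<Delta>)"
    and span: "\<forall>G\<in>\<Delta>. \<forall>g. \<exists>c. \<forall>w\<in>G. g w = (\<Sum>f\<in>set \<theta>s. c f * f w)"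
  shows "Poly_Mapping.keys m \<subseteq> vertices \<Delta> \<Longrightarrow> card (vertices \<Delta>) < (\<Sum>w\<in>vertices \<Delta>. Poly_Mapping.lookup m w)
     \<Longrightarrow> Poly_Mapping.single m (1::'k) \<in> qI \<Delta> \<theta>s"
proof (induction "card (vertices \<Delta>) - card (Poly_Mapping.keys m)" arbitrary: m rule: less_induct)
  case less
  define W where "W = vertices \<Delta>"
  define F where "F = Poly_Mapping.keys m"
  show ?case
  proof (cases "F \<in> \<Delta>")
    case False
    then show ?thesis using mon_nonface[of m \<Delta>] less.prems F_def by auto
  next
    case True
    have "\<exists>w\<in>W. 2 \<le> Poly_Mapping.lookup m w"
    proof (rule ccontr)
      assume "\<not> ?thesis"
      then have "(\<Sum>w\<in>W. Poly_Mapping.lookup m w) \<le> (\<Sum>w\<in>W. 1)"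
        by (intro sum_mono) (auto simp: not_le)
      then show False using less.prems W_def by simp
    qed
    then obtain w where w: "w \<in> W" "2 \<le> Poly_Mapping.lookup m w" by blast
    define e where "e u = Poly_Mapping.single u (1::nat)" for u :: 'w
    have le: "Poly_Mapping.lookup (e u) x = (if x = u then 1 else 0)" for u x
      unfolding e_def by (simp add: lookup_single when_def)
    define m' where "m' = m - e w"
    have mm': "m = m' + e w"
      by (rule poly_mapping_eqI) (use w in \<open>auto simp: lookup_add lookup_minus le m'_def\<close>)
    have km': "Poly_Mapping.keys m' = F"
      using w by (auto simp: in_keys_iff lookup_minus le m'_def F_def)
    have wF: "w \<in> F" using w by (auto simp: F_def in_keys_iff)
    have FW: "F \<subseteq> W" using less.prems F_def W_def by simp
    have "\<forall>g. \<exists>c. \<forall>u\<in>F. g u = (\<Sum>f\<in>set \<theta>s. c f * f u)"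
      using span True by (rule bspec)
    then obtain c where c: "\<forall>u\<in>F. (if u = w then 1 else 0) = (\<Sum>f\<in>set \<theta>s. c f * f u)"
      by (rule allE[where x="\<lambda>u. if u = w then 1 else 0"]) (rule exE)
    define lf where "lf u = (\<Sum>f\<in>set \<theta>s. c f * f u)" for u
    have lF: "u \<in> F \<Longrightarrow> lf u = (if u = w then 1 else 0)" for u using c lf_def by simp
    have finW: "finite W" using fin W_def by simp
    have prod: "Poly_Mapping.single m' 1 * lin_form W lf = (\<Sum>u\<in>W. Poly_Mapping.single (m' + e u) (lf u))"
      unfolding lin_form_def by (simp add: sum_distrib_left mult_single e_def)
    also have "\<dots> = (\<Sum>u\<in>F. Poly_Mapping.single (m' + e u) (lf u)) + (\<Sum>u\<in>W - F. Poly_Mapping.single (m' + e u) (lf u))"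
      using sum.subset_diff[OF FW finW] by (simp add: add.commute)
    also have "(\<Sum>u\<in>F. Poly_Mapping.single (m' + e u) (lf u)) = (\<Sum>u\<in>F. if u = w then Poly_Mapping.single (m' + e w) 1 else 0)"
      by (rule sum.cong) (auto simp: lF)
    also have "\<dots> = Poly_Mapping.single m 1"
      using wF FW finW finite_subset[OF FW finW] by (simp add: mm')
    finally have eq0: "Poly_Mapping.single m' 1 * lin_form W lf = Poly_Mapping.single m 1 + (\<Sum>u\<in>W - F. Poly_Mapping.single (m' + e u) (lf u))" .
    have eq: "Poly_Mapping.single m' 1 * lin_form W lf - (\<Sum>u\<in>W - F. Poly_Mapping.single (m' + e u) (lf u)) = Poly_Mapping.single m 1"
      unfolding eq0 by simp
    have A: "Poly_Mapping.single m' (1::'k) * lin_form W lf \<in> qI \<Delta> \<theta>s"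
      using qI_mult[OF lin_in_qI[OF fin, where \<theta>s=\<theta>s and c=c], of "Poly_Mapping.single m' 1"] polys_single[of m' W 1]
        km' FW unfolding lf_def[abs_def] W_def by (simp add: mult.commute)
    have B: "Poly_Mapping.single (m' + e u) (lf u) \<in> qI \<Delta> \<theta>s" if u: "u \<in> W - F" for u
    proof (rule qI_single, rule less.hyps)
      have k: "Poly_Mapping.keys (m' + e u) = insert u F"
        using km' by (simp add: keys_add_nat e_def)
      have "card F < card W" using u FW finW by (intro psubset_card_mono) auto
      then show "card (vertices \<Delta>) - card (Poly_Mapping.keys (m' + e u)) < card (vertices \<Delta>) - card (Poly_Mapping.keys m)"
        using k u finite_subset[OF FW finW] W_def F_def by simp
      show "Poly_Mapping.keys (m' + e u) \<subseteq> vertices \<Delta>" using k u FW W_def by auto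
      have s1: "(\<Sum>x\<in>W. Poly_Mapping.lookup (m' + e v) x) = (\<Sum>x\<in>W. Poly_Mapping.lookup m' x) + 1" if "v \<in> W" for v
        using that finW by (simp add: lookup_add sum.distrib le)
      show "card (vertices \<Delta>) < (\<Sum>x\<in>vertices \<Delta>. Poly_Mapping.lookup (m' + e u) x)"
        using less.prems(2) s1[of u] s1[of w] u w mm' W_def by simp
    qed
    have "(\<Sum>u\<in>W - F. Poly_Mapping.single (m' + e u) (lf u)) \<in> qI \<Delta> \<theta>s"
      unfolding qI_def by (rule ideal_sum) (use finW B in \<open>auto simp: qI_def\<close>)
    from ideal_diff[OF A[unfolded qI_def] this[unfolded qI_def]]
    show ?thesis unfolding qI_def eq[symmetric] .
  qed
qed

lemma poly_sum_keys: "p = (\<Sum>m\<in>Poly_Mapping.keys p. Poly_Mapping.single m (Poly_Mapping.lookup p m))"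
proof (rule poly_mapping_eqI)
  fix k
  show "Poly_Mapping.lookup p k = Poly_Mapping.lookup (\<Sum>m\<in>Poly_Mapping.keys p. Poly_Mapping.single m (Poly_Mapping.lookup p m)) k"
  proof (cases "k \<in> Poly_Mapping.keys p")
    case True
    then show ?thesis by (simp add: lookup_sum lookup_single when_def)
  next
    case False
    then have "\<forall>m\<in>Poly_Mapping.keys p. Poly_Mapping.lookup (Poly_Mapping.single m (Poly_Mapping.lookup p m)) k = 0"
      by (auto simp: lookup_single when_def)
    then show ?thesis using False by (simp add: lookup_sum in_keys_iff)
  qed
qed

lemma single_one_inj: "Poly_Mapping.single x (1::'k::field) = Poly_Mapping.single y 1 \<Longrightarrow> x = y"
  by (metis lookup_single_eq lookup_single_not_eq one_neq_zero)

lemma fq_from_span: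
  fixes \<Delta> :: "'w set set" and \<theta>s :: "('w \<Rightarrow> 'k::field) list"
  assumes fin: "finite (vertices \<Delta>)"
    and span: "\<forall>G\<in>\<Delta>. \<forall>g. \<exists>c. \<forall>w\<in>G. g w = (\<Sum>f\<in>set \<theta>s. c f * f w)"
  shows "finite_quotient \<Delta> \<theta>s"
proof -
  define W where "W = vertices \<Delta>"
  define M where "M = {m. Poly_Mapping.keys m \<subseteq> W \<and> (\<Sum>w\<in>W. Poly_Mapping.lookup m w) \<le> card W}"
  define S where "S = (\<lambda>m. Poly_Mapping.single m (1::'k)) ` M"
  have "Poly_Mapping.lookup ` M \<subseteq> {f. \<forall>x. (x \<in> W \<longrightarrow> f x \<in> {..card W}) \<and> (x \<notin> W \<longrightarrow> f x = 0)}"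
  proof -
    have a: "Poly_Mapping.lookup m x \<le> card W" if m: "m \<in> M" and x: "x \<in> W" for m x
      using m x member_le_sum[of x W "Poly_Mapping.lookup m"] fin W_def unfolding M_def by auto
    have b: "Poly_Mapping.lookup m x = 0" if m: "m \<in> M" and x: "x \<notin> W" for m x
      using m x unfolding M_def by (auto simp: in_keys_iff)
    show ?thesis using a b by auto
  qed
  then have "finite (Poly_Mapping.lookup ` M)"
    by (rule finite_subset) (intro finite_set_of_finite_funs, use fin W_def in auto)
  moreover have "inj_on Poly_Mapping.lookup M"
    by (rule inj_onI) (simp add: poly_mapping_eqI)
  ultimately have finM: "finite M" by (rule finite_imageD)
  have Sp: "S \<subseteq> polys W" unfolding S_def M_def by (auto intro: polys_single)
  have main: "\<exists>c. p - (\<Sum>s\<in>S. const_poly (c s) * s) \<in> qI \<Delta> \<theta>s" if p: "p \<in> polys W" for p :: "('w,'k) mpoly"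
  proof -
    define c where "c s = (\<Sum>m\<in>Poly_Mapping.keys s. Poly_Mapping.lookup p m)" for s :: "('w,'k) mpoly"
    have "(\<Sum>s\<in>S. const_poly (c s) * s) = (\<Sum>m\<in>M. const_poly (c (Poly_Mapping.single m 1)) * Poly_Mapping.single m 1)"
      unfolding S_def by (subst sum.reindex) (auto simp: inj_on_def dest: single_one_inj)
    also have "\<dots> = (\<Sum>m\<in>M. Poly_Mapping.single m (Poly_Mapping.lookup p m))"
      by (simp add: c_def const_single)
    also have "\<dots> = (\<Sum>m\<in>M \<inter> Poly_Mapping.keys p. Poly_Mapping.single m (Poly_Mapping.lookup p m))"
      by (rule sum.mono_neutral_right) (auto simp: finM in_keys_iff)
    finally have e1: "(\<Sum>s\<in>S. const_poly (c s) * s) = (\<Sum>m\<in>M \<inter> Poly_Mapping.keys p. Poly_Mapping.single m (Poly_Mapping.lookup p m))" .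
    have e2: "p = (\<Sum>m\<in>Poly_Mapping.keys p \<inter> M. Poly_Mapping.single m (Poly_Mapping.lookup p m)) + (\<Sum>m\<in>Poly_Mapping.keys p - M. Poly_Mapping.single m (Poly_Mapping.lookup p m))"
      by (subst poly_sum_keys) (simp add: sum.Int_Diff)
    have "p - (\<Sum>s\<in>S. const_poly (c s) * s) = (\<Sum>m\<in>Poly_Mapping.keys p - M. Poly_Mapping.single m (Poly_Mapping.lookup p m))"
    proof -
      define A where "A = (\<Sum>m\<in>M \<inter> Poly_Mapping.keys p. Poly_Mapping.single m (Poly_Mapping.lookup p m))"
      define B where "B = (\<Sum>m\<in>Poly_Mapping.keys p - M. Poly_Mapping.single m (Poly_Mapping.lookup p m))"
      have "p = A + B" using e2 unfolding A_def B_def by (simp add: Int_commute)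
      then have "p - A = B" by simp
      then show ?thesis using e1 unfolding A_def B_def by simp
    qed
    also have "\<dots> \<in> qI \<Delta> \<theta>s"
      unfolding qI_def
    proof (rule ideal_sum)
      fix m assume m: "m \<in> Poly_Mapping.keys p - M"
      then have "Poly_Mapping.keys m \<subseteq> W" using p unfolding polys_def by auto
      then have "card W < (\<Sum>w\<in>W. Poly_Mapping.lookup m w)" using m unfolding M_def by auto
      then have "Poly_Mapping.single m 1 \<in> qI \<Delta> \<theta>s"
        using mon_high[OF fin span] \<open>Poly_Mapping.keys m \<subseteq> W\<close> W_def by simp
      then show "Poly_Mapping.single m (Poly_Mapping.lookup p m) \<in> ideal_gen (polys (vertices \<Delta>))
           ({xmon F |F. F \<subseteq> vertices \<Delta> \<and> F \<notin> \<Delta>} \<union> lin_form (vertices \<Delta>) ` set \<theta>s)"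
        using qI_single unfolding qI_def by blast
    qed simp
    finally show ?thesis by blast
  qed
  have fS: "finite S" unfolding S_def using finM by simp
  show ?thesis unfolding finite_quotient_def
  proof (rule exI[of _ S], intro conjI ballI)
    show "finite S" by (rule fS)
    show "S \<subseteq> polys (vertices \<Delta>)" using Sp W_def by simp
    fix p :: "('w,'k) mpoly" assume "p \<in> polys (vertices \<Delta>)"
    then show "\<exists>c. p - (\<Sum>s\<in>S. const_poly (c s) * s) \<in> ideal_gen (polys (vertices \<Delta>))
               ({xmon F |F. F \<subseteq> vertices \<Delta> \<and> F \<notin> \<Delta>} \<union> lin_form (vertices \<Delta>) ` set \<theta>s)"
      using main W_def unfolding qI_def by simp
  qed
qed

definition subsp :: "('w \<Rightarrow> 'k::field) set \<Rightarrow> bool" where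
  "subsp A \<longleftrightarrow> (\<lambda>_. 0) \<in> A \<and> (\<forall>x\<in>A. \<forall>y\<in>A. (\<lambda>w. x w + y w) \<in> A) \<and> (\<forall>a. \<forall>x\<in>A. (\<lambda>w. a * x w) \<in> A)"

lemma subsp_add: "subsp A \<Longrightarrow> x \<in> A \<Longrightarrow> y \<in> A \<Longrightarrow> (\<lambda>w. x w + y w) \<in> A"
  unfolding subsp_def by blast

lemma subsp_scale: "subsp A \<Longrightarrow> x \<in> A \<Longrightarrow> (\<lambda>w. a * x w) \<in> A"
  unfolding subsp_def by blast

lemma subsp_zero: "subsp A \<Longrightarrow> (\<lambda>_. 0) \<in> A"
  unfolding subsp_def by blast

lemma subsp_diff:
  assumes "subsp A" "x \<in> A" "y \<in> A" shows "(\<lambda>w. x w - y w) \<in> A"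
  using subsp_add[OF assms(1,2) subsp_scale[OF assms(1,3), of "-1"]] by simp

lemma line_hits:
  fixes x y :: "'w \<Rightarrow> 'k::field"
  assumes B: "subsp B" and x: "x \<notin> B"
  shows "finite {t. (\<lambda>w. x w + t * y w) \<in> B}"
proof -
  have uniq: "t = s" if t: "(\<lambda>w. x w + t * y w) \<in> B" and s: "(\<lambda>w. x w + s * y w) \<in> B" for t s
  proof (rule ccontr)
    assume ts: "t \<noteq> s"
    have "(\<lambda>w. (x w + t * y w) - (x w + s * y w)) \<in> B" using subsp_diff[OF B t s] .
    then have "(\<lambda>w. (t - s) * y w) \<in> B" by (simp add: algebra_simps)
    from subsp_scale[OF B this, of "inverse (t - s)"]
    have "(\<lambda>w. inverse (t - s) * ((t - s) * y w)) \<in> B" .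
    moreover have "(\<lambda>w. inverse (t - s) * ((t - s) * y w)) = y"
      using ts by (simp add: fun_eq_iff mult.assoc[symmetric])
    ultimately have yB: "y \<in> B" by simp
    have "(\<lambda>w. t * y w) \<in> B" using subsp_scale[OF B yB] .
    from subsp_diff[OF B t this] have "x \<in> B" by simp
    then show False using x by simp
  qed
  show ?thesis
  proof (cases "{t. (\<lambda>w. x w + t * y w) \<in> B} = {}")
    case False
    then obtain t0 where "t0 \<in> {t. (\<lambda>w. x w + t * y w) \<in> B}" by blast
    then have "{t. (\<lambda>w. x w + t * y w) \<in> B} \<subseteq> {t0}" using uniq by blast
    then show ?thesis using finite_subset by blast
  qed simp
qed

lemma line_points:
  fixes x y :: "'w \<Rightarrow> 'k::field"
  assumes "y \<noteq> (\<lambda>_. 0)"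
  shows "finite {t. (\<lambda>w. x w + t * y w) = q}"
proof -
  have uniq: "t = s" if t: "(\<lambda>w. x w + t * y w) = q" and s: "(\<lambda>w. x w + s * y w) = q" for t s
  proof (rule ccontr)
    assume ts: "t \<noteq> s"
    obtain w where "y w \<noteq> 0" using assms by auto
    moreover have "x w + t * y w = x w + s * y w" using t s by metis
    ultimately show False using ts by simp
  qed
  show ?thesis
  proof (cases "{t. (\<lambda>w. x w + t * y w) = q} = {}")
    case False
    then obtain t0 where "t0 \<in> {t. (\<lambda>w. x w + t * y w) = q}" by blast
    then have "{t. (\<lambda>w. x w + t * y w) = q} \<subseteq> {t0}" using uniq by blast
    then show ?thesis using finite_subset by blast
  qed simp
qed

lemma avoid_subspaces:
  assumes inf: "infinite (UNIV :: 'k::field set)" and A: "subsp (A :: ('w \<Rightarrow> 'k) set)"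
    and fin: "finite \<B>" and Bs: "\<forall>B\<in>\<B>. subsp B \<and> (\<exists>a\<in>A. a \<notin> B)"
  shows "\<exists>x\<in>A. \<forall>B\<in>\<B>. x \<notin> B"
  using fin Bs
proof (induction \<B> rule: finite_induct)
  case empty
  then show ?case using subsp_zero[OF A] by blast
next
  case (insert B \<B>)
  then obtain x where x: "x \<in> A" "\<forall>B'\<in>\<B>. x \<notin> B'" by auto
  obtain y where y: "y \<in> A" "y \<notin> B" and sB: "subsp B" using insert.prems by auto
  show ?case
  proof (cases "x \<in> B")
    case False then show ?thesis using x by auto
  next
    case True
    define bad where "bad = insert 0 (\<Union>B'\<in>\<B>. {t. (\<lambda>w. x w + t * y w) \<in> B'})"
    have "finite bad" unfolding bad_def using insert.hyps insert.prems x
      by (auto intro!: line_hits)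
    then obtain t where t: "t \<notin> bad" using inf by (metis ex_new_if_finite)
    have inA: "(\<lambda>w. x w + t * y w) \<in> A"
      using subsp_add[OF A x(1) subsp_scale[OF A y(1)]] .
    have notB: "(\<lambda>w. x w + t * y w) \<notin> B"
    proof
      assume h: "(\<lambda>w. x w + t * y w) \<in> B"
      from subsp_diff[OF sB h True] have "(\<lambda>w. t * y w) \<in> B" by simp
      from subsp_scale[OF sB this] have "(\<lambda>w. inverse t * (t * y w)) \<in> B" .
      moreover have "t \<noteq> 0" using t bad_def by auto
      moreover have "(\<lambda>w. inverse t * (t * y w)) = y" if "t \<noteq> 0"
        using that by (simp add: fun_eq_iff mult.assoc[symmetric])
      ultimately show False using y by simp
    qed
    show ?thesis using inA notB t unfolding bad_def by auto
  qed
qed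

lemma avoid_all:
  assumes inf: "infinite (UNIV :: 'k::field set)" and A: "subsp (A :: ('w \<Rightarrow> 'k) set)"
    and fin: "finite \<B>" and Bs: "\<forall>B\<in>\<B>. subsp B \<and> (\<exists>a\<in>A. a \<notin> B)"
    and Q: "finite Q" and y: "y \<in> A" "y \<noteq> (\<lambda>_. 0)"
  shows "\<exists>x\<in>A. (\<forall>B\<in>\<B>. x \<notin> B) \<and> x \<notin> Q"
proof -
  obtain x where x: "x \<in> A" "\<forall>B\<in>\<B>. x \<notin> B" using avoid_subspaces[OF inf A fin Bs] by blast
  define bad where "bad = (\<Union>B\<in>\<B>. {t. (\<lambda>w. x w + t * y w) \<in> B}) \<union> (\<Union>q\<in>Q. {t. (\<lambda>w. x w + t * y w) = q})"
  have "finite bad" unfolding bad_def using fin Bs x Q y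
    by (auto intro!: line_hits line_points)
  then obtain t where t: "t \<notin> bad" using inf by (metis ex_new_if_finite)
  have inA: "(\<lambda>w. x w + t * y w) \<in> A"
    using subsp_add[OF A x(1) subsp_scale[OF A y(1)]] .
  show ?thesis using inA t unfolding bad_def by auto
qed

definition spans :: "'w set \<Rightarrow> ('w \<Rightarrow> 'k::field) set \<Rightarrow> bool" where
  "spans G T \<longleftrightarrow> (\<forall>g. \<exists>c. \<forall>w\<in>G. g w = (\<Sum>f\<in>T. c f * f w))"

definition spanG :: "'w set \<Rightarrow> ('w \<Rightarrow> 'k::field) set \<Rightarrow> ('w \<Rightarrow> 'k) set" where
  "spanG G T = {g. \<exists>c. \<forall>w\<in>G. g w = (\<Sum>f\<in>T. c f * f w)}"

lemma subsp_spanG: "subsp (spanG G T)"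
proof -
  have z: "(\<lambda>_. 0) \<in> spanG G T" unfolding spanG_def by (auto intro!: exI[of _ "\<lambda>_. 0"])
  have a: "(\<lambda>w. x w + y w) \<in> spanG G T" if xs: "x \<in> spanG G T" and ys: "y \<in> spanG G T" for x y
  proof -
    obtain c where "\<forall>w\<in>G. x w = (\<Sum>f\<in>T. c f * f w)"
      using xs unfolding spanG_def by blast
    moreover obtain d where "\<forall>w\<in>G. y w = (\<Sum>f\<in>T. d f * f w)"
      using ys unfolding spanG_def by blast
    ultimately have "\<forall>w\<in>G. x w + y w = (\<Sum>f\<in>T. (c f + d f) * f w)" by (simp add: distrib_right sum.distrib)
    then show ?thesis unfolding spanG_def by (intro CollectI exI)
  qed
  have m: "(\<lambda>w. a * x w) \<in> spanG G T" if xs: "x \<in> spanG G T" for a x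
  proof -
    obtain c where "\<forall>w\<in>G. x w = (\<Sum>f\<in>T. c f * f w)" using xs unfolding spanG_def by blast
    then have "\<forall>w\<in>G. a * x w = (\<Sum>f\<in>T. (a * c f) * f w)" by (simp add: sum_distrib_left mult.assoc)
    then show ?thesis unfolding spanG_def by (intro CollectI exI)
  qed
  show ?thesis unfolding subsp_def using z a m by blast
qed

lemma spans_mono:
  assumes "spans G T" "T \<subseteq> T'" "finite T'"
  shows "spans G T'"
  unfolding spans_def
proof
  fix g
  obtain c where c: "\<forall>w\<in>G. g w = (\<Sum>f\<in>T. c f * f w)" using assms(1) unfolding spans_def by blast
  have "\<forall>w\<in>G. g w = (\<Sum>f\<in>T'. (if f \<in> T then c f else 0) * f w)"
  proof
    fix w assume "w \<in> G"
    have "(\<Sum>f\<in>T'. (if f \<in> T then c f else 0) * f w) = (\<Sum>f\<in>T'. if f \<in> T then c f * f w else 0)"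
      by (rule sum.cong) auto
    also have "\<dots> = (\<Sum>f\<in>T' \<inter> T. c f * f w)" using assms(3) by (simp add: sum.inter_restrict)
    also have "T' \<inter> T = T" using assms(2) by blast
    finally show "g w = (\<Sum>f\<in>T'. (if f \<in> T then c f else 0) * f w)" using c \<open>w \<in> G\<close> by simp
  qed
  then show "\<exists>c. \<forall>w\<in>G. g w = (\<Sum>f\<in>T'. c f * f w)" by (rule exI[of _ "\<lambda>f. if f \<in> T then c f else 0"])
qed

lemma spans_absorb:
  assumes fin: "finite T" and sp: "spans G (insert \<psi> T)" and psi: "\<psi> \<in> spanG G T"
  shows "spans G T"
proof (cases "\<psi> \<in> T")
  case True then show ?thesis using sp by (simp add: insert_absorb)
next
  case False
  obtain d where d: "\<forall>w\<in>G. \<psi> w = (\<Sum>f\<in>T. d f * f w)" using psi unfolding spanG_def by blast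
  show ?thesis unfolding spans_def
  proof
    fix g
    obtain c where c: "\<forall>w\<in>G. g w = (\<Sum>f\<in>insert \<psi> T. c f * f w)" using sp unfolding spans_def by blast
    have "\<forall>w\<in>G. g w = (\<Sum>f\<in>T. (c f + c \<psi> * d f) * f w)"
    proof
      fix w assume w: "w \<in> G"
      have "g w = c \<psi> * \<psi> w + (\<Sum>f\<in>T. c f * f w)" using c w fin False by simp
      also have "\<dots> = (\<Sum>f\<in>T. (c f + c \<psi> * d f) * f w)"
        using d w by (simp add: sum_distrib_left distrib_right sum.distrib mult.assoc add.commute)
      finally show "g w = (\<Sum>f\<in>T. (c f + c \<psi> * d f) * f w)" .
    qed
    then show "\<exists>c. \<forall>w\<in>G. g w = (\<Sum>f\<in>T. c f * f w)" by (rule exI[of _ "\<lambda>f. c f + c \<psi> * d f"])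
  qed
qed

lemma spans_exchange:
  assumes fin: "finite T" and sp: "spans G (insert \<psi> T)" and phi: "\<phi> \<notin> spanG G T"
  shows "spans G (insert \<phi> T)"
proof -
  have phiT: "\<phi> \<notin> T"
  proof
    assume "\<phi> \<in> T"
    have "\<forall>w\<in>G. \<phi> w = (\<Sum>f\<in>T. (if f = \<phi> then 1 else 0) * f w)"
    proof
      fix w
      have "(\<Sum>f\<in>T. (if f = \<phi> then 1 else 0) * f w) = (\<Sum>f\<in>T. if f = \<phi> then f w else 0)"
        by (rule sum.cong) auto
      also have "\<dots> = \<phi> w" using \<open>\<phi> \<in> T\<close> fin by (simp add: sum.delta')
      finally show "\<phi> w = (\<Sum>f\<in>T. (if f = \<phi> then 1 else 0) * f w)" by simp
    qed
    then have "\<phi> \<in> spanG G T" unfolding spanG_def by (intro CollectI exI)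
    then show False using phi by simp
  qed
  have psiT: "\<psi> \<notin> T"
  proof
    assume "\<psi> \<in> T"
    then have "spans G T" using sp by (simp add: insert_absorb)
    then obtain c where "\<forall>w\<in>G. \<phi> w = (\<Sum>f\<in>T. c f * f w)" unfolding spans_def by blast
    then have "\<phi> \<in> spanG G T" unfolding spanG_def by (intro CollectI exI)
    then show False using phi by simp
  qed
  obtain d where d: "\<forall>w\<in>G. \<phi> w = (\<Sum>f\<in>insert \<psi> T. d f * f w)" using sp unfolding spans_def by blast
  have d2: "\<forall>w\<in>G. \<phi> w = d \<psi> * \<psi> w + (\<Sum>f\<in>T. d f * f w)" using d fin psiT by simp
  have dpsi: "d \<psi> \<noteq> 0"
  proof
    assume "d \<psi> = 0"
    then have "\<forall>w\<in>G. \<phi> w = (\<Sum>f\<in>T. d f * f w)" using d2 by simp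
    then have "\<phi> \<in> spanG G T" unfolding spanG_def by (intro CollectI exI)
    then show False using phi by simp
  qed
  show ?thesis unfolding spans_def
  proof
    fix g
    obtain c where c: "\<forall>w\<in>G. g w = (\<Sum>f\<in>insert \<psi> T. c f * f w)" using sp unfolding spans_def by blast
    define e where "e f = (if f = \<phi> then c \<psi> / d \<psi> else c f - c \<psi> * d f / d \<psi>)" for f
    have "\<forall>w\<in>G. g w = (\<Sum>f\<in>insert \<phi> T. e f * f w)"
    proof
      fix w assume w: "w \<in> G"
      define a where "a = c \<psi> / d \<psi>"
      define D where "D = (\<Sum>f\<in>T. d f * f w)"
      define C where "C = (\<Sum>f\<in>T. c f * f w)"
      have "(\<Sum>f\<in>insert \<phi> T. e f * f w) = e \<phi> * \<phi> w + (\<Sum>f\<in>T. e f * f w)"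
        using fin phiT by simp
      also have "(\<Sum>f\<in>T. e f * f w) = (\<Sum>f\<in>T. c f * f w - a * (d f * f w))"
        using phiT by (intro sum.cong) (auto simp: e_def a_def algebra_simps)
      also have "\<dots> = C - a * D"
        unfolding C_def D_def by (simp add: sum_subtractf sum_distrib_left)
      also have "e \<phi> = a" by (simp add: e_def a_def)
      also have "\<phi> w = d \<psi> * \<psi> w + D" using d2 w D_def by simp
      also have "a * (d \<psi> * \<psi> w + D) + (C - a * D) = c \<psi> * \<psi> w + C"
        using dpsi unfolding a_def by (simp add: algebra_simps)
      also have "\<dots> = g w" using c w fin psiT C_def by simp
      finally show "g w = (\<Sum>f\<in>insert \<phi> T. e f * f w)" by simp
    qed
    then show "\<exists>c. \<forall>w\<in>G. g w = (\<Sum>f\<in>insert \<phi> T. c f * f w)" by (rule exI[of _ e])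
  qed
qed

lemma greedy:
  fixes A :: "nat \<Rightarrow> ('w \<Rightarrow> 'k::field) set" and \<G> :: "'w set set"
  assumes inf: "infinite (UNIV::'k set)"
    and fin: "finite \<G>"
    and subs: "\<forall>j<m. subsp (A j)"
    and rm: "r \<le> m"
    and nz: "\<forall>j<r. \<exists>y\<in>A j. y \<noteq> (\<lambda>_. 0)"
    and base: "\<forall>G\<in>\<G>. \<exists>L. length L = m \<and> (\<forall>j<m. L!j \<in> A j) \<and> spans G (set L)"
  shows "\<exists>\<theta>s. length \<theta>s = m \<and> (\<forall>j<m. \<theta>s!j \<in> A j) \<and> (\<forall>j<r. \<forall>j'<r. \<theta>s!j = \<theta>s!j' \<longrightarrow> j = j')
           \<and> (\<forall>G\<in>\<G>. spans G (set \<theta>s))"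
proof -
  define P where "P i \<longleftrightarrow> (\<exists>pre. length pre = i \<and> (\<forall>j<i. pre!j \<in> A j)
     \<and> (\<forall>j<i. \<forall>j'<i. j < r \<longrightarrow> j' < r \<longrightarrow> pre!j = pre!j' \<longrightarrow> j = j')
     \<and> (\<forall>G\<in>\<G>. \<exists>rest. length rest = m - i \<and> (\<forall>j<m-i. rest!j \<in> A (i+j)) \<and> spans G (set pre \<union> set rest)))" for i
  have P0: "P 0" unfolding P_def by (rule exI[of _ "[]"]) (use base in auto)
  have step: "P (Suc i)" if im: "i < m" and Pi: "P i" for i
  proof -
    obtain pre where len: "length pre = i" and preA: "\<forall>j<i. pre!j \<in> A j"
      and dist: "\<forall>j<i. \<forall>j'<i. j < r \<longrightarrow> j' < r \<longrightarrow> pre!j = pre!j' \<longrightarrow> j = j'"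
      and R: "\<forall>G\<in>\<G>. \<exists>rest. length rest = m - i \<and> (\<forall>j<m-i. rest!j \<in> A (i+j)) \<and> spans G (set pre \<union> set rest)"
      using Pi unfolding P_def by blast
    from bchoice[OF R] obtain Rf where Rf: "\<forall>G\<in>\<G>. length (Rf G) = m - i \<and> (\<forall>j<m-i. Rf G!j \<in> A (i+j)) \<and> spans G (set pre \<union> set (Rf G))" ..
    define T where "T G = set pre \<union> set (tl (Rf G))" for G
    define \<psi> where "\<psi> G = hd (Rf G)" for G
    have finT: "finite (T G)" for G unfolding T_def by simp
    have RfS: "set pre \<union> set (Rf G) = insert (\<psi> G) (T G)" if "G \<in> \<G>" for G
    proof -
      have "Rf G \<noteq> []" using Rf that im by auto
      then show ?thesis unfolding T_def \<psi>_def by (cases "Rf G") auto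
    qed
    have psiA: "\<psi> G \<in> A i" if "G \<in> \<G>" for G
    proof -
      have "Rf G \<noteq> []" using Rf that im by auto
      then have "\<psi> G = Rf G ! 0" unfolding \<psi>_def by (simp add: hd_conv_nth)
      then show ?thesis using Rf that im by fastforce
    qed
    have spI: "spans G (insert (\<psi> G) (T G))" if "G \<in> \<G>" for G
      using Rf RfS[OF that] that by metis
    define \<G>b where "\<G>b = {G\<in>\<G>. \<not> spans G (T G)}"
    define \<B> where "\<B> = (\<lambda>G. spanG G (T G)) ` \<G>b"
    have finB: "finite \<B>" unfolding \<B>_def \<G>b_def using fin by simp
    have Bs: "\<forall>B\<in>\<B>. subsp B \<and> (\<exists>a\<in>A i. a \<notin> B)"
    proof
      fix B assume "B \<in> \<B>"
      then obtain G where G: "G \<in> \<G>" "\<not> spans G (T G)" and BG: "B = spanG G (T G)"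
        unfolding \<B>_def \<G>b_def by blast
      have "\<psi> G \<notin> B"
      proof
        assume "\<psi> G \<in> B"
        then have "spans G (T G)" using spans_absorb[OF finT spI[OF G(1)]] BG by simp
        then show False using G by simp
      qed
      then show "subsp B \<and> (\<exists>a\<in>A i. a \<notin> B)" using psiA[OF G(1)] BG subsp_spanG by blast
    qed
    have Ai: "subsp (A i)" using subs im by simp
    obtain \<phi> where phiA: "\<phi> \<in> A i" and phiB: "\<forall>B\<in>\<B>. \<phi> \<notin> B" and phiQ: "i < r \<longrightarrow> \<phi> \<notin> set pre"
    proof (cases "i < r")
      case True
      then obtain y where "y \<in> A i" "y \<noteq> (\<lambda>_. 0)" using nz by blast
      from avoid_all[OF inf Ai finB Bs _ this, of "set pre"] that show ?thesis by auto
    next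
      case False
      from avoid_subspaces[OF inf Ai finB Bs] that False show ?thesis by auto
    qed
    show ?thesis unfolding P_def
    proof (rule exI[of _ "pre @ [\<phi>]"], intro conjI allI impI ballI)
      show "length (pre @ [\<phi>]) = Suc i" using len by simp
    next
      fix j assume j: "j < Suc i"
      show "(pre @ [\<phi>]) ! j \<in> A j"
      proof (cases "j < i")
        case True then show ?thesis using preA len by (simp add: nth_append)
      next
        case False then have "j = i" using j by simp
        then show ?thesis using phiA len by (simp add: nth_append)
      qed
    next
      fix j j' assume j: "j < Suc i" "j' < Suc i" "j < r" "j' < r" and eq: "(pre @ [\<phi>]) ! j = (pre @ [\<phi>]) ! j'"
      show "j = j'"
      proof (cases "j < i")
        case True
        show ?thesis
        proof (cases "j' < i")
          case True
          then show ?thesis using \<open>j < i\<close> eq dist j len by (auto simp: nth_append)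
        next
          case False
          then have "j' = i" using j by simp
          then have "\<phi> \<in> set pre" using eq \<open>j < i\<close> len by (auto simp: nth_append)
          then show ?thesis using phiQ j \<open>j' = i\<close> by simp
        qed
      next
        case False
        then have ji: "j = i" using j by simp
        show ?thesis
        proof (cases "j' < i")
          case True
          then have "\<phi> \<in> set pre" using eq ji len by (auto simp: nth_append)
          then show ?thesis using phiQ j ji by simp
        next
          case False
          then show ?thesis using ji j by simp
        qed
      qed
    next
      fix G assume G: "G \<in> \<G>"
      show "\<exists>rest. length rest = m - Suc i \<and> (\<forall>j<m - Suc i. rest ! j \<in> A (Suc i + j))
              \<and> spans G (set (pre @ [\<phi>]) \<union> set rest)"
      proof (rule exI[of _ "tl (Rf G)"], intro conjI allI impI)
        show "length (tl (Rf G)) = m - Suc i" using Rf G by simp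
      next
        fix j assume j: "j < m - Suc i"
        have "Suc j < m - i" using j by simp
        then have "Rf G ! Suc j \<in> A (i + Suc j)" using Rf G by blast
        then show "tl (Rf G) ! j \<in> A (Suc i + j)" using Rf G j by (simp add: nth_tl)
      next
        have eqs: "set (pre @ [\<phi>]) \<union> set (tl (Rf G)) = insert \<phi> (T G)" unfolding T_def by auto
        show "spans G (set (pre @ [\<phi>]) \<union> set (tl (Rf G)))"
        proof (cases "spans G (T G)")
          case True
          then show ?thesis unfolding eqs by (rule spans_mono) (auto simp: finT)
        next
          case False
          then have "spanG G (T G) \<in> \<B>" unfolding \<B>_def \<G>b_def using G by blast
          then have "\<phi> \<notin> spanG G (T G)" using phiB by blast
          then show ?thesis unfolding eqs by (rule spans_exchange[OF finT spI[OF G]])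
        qed
      qed
    qed
  qed
  have Pall: "i \<le> m \<Longrightarrow> P i" for i
    by (induction i) (auto intro: step P0)
  obtain pre where len: "length pre = m" and preA: "\<forall>j<m. pre!j \<in> A j"
      and dist: "\<forall>j<m. \<forall>j'<m. j < r \<longrightarrow> j' < r \<longrightarrow> pre!j = pre!j' \<longrightarrow> j = j'"
      and R: "\<forall>G\<in>\<G>. \<exists>rest. length rest = m - m \<and> (\<forall>j<m-m. rest!j \<in> A (m+j)) \<and> spans G (set pre \<union> set rest)"
    using Pall[of m] unfolding P_def by blast
  have "\<forall>G\<in>\<G>. spans G (set pre)" using R by auto
  then show ?thesis using len preA dist rm by (intro exI[of _ pre]) auto
qed

lemma hall:
  fixes R :: "'a \<Rightarrow> 'b \<Rightarrow> bool"
  assumes "finite X" "finite Y" "\<forall>T\<subseteq>X. card T \<le> card {y\<in>Y. \<exists>x\<in>T. R x y}"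
  shows "\<exists>f. inj_on f X \<and> (\<forall>x\<in>X. f x \<in> Y \<and> R x (f x))"
  using assms
proof (induction "card X" arbitrary: X Y rule: less_induct)
  case less
  define N where "N Y' T = {y\<in>Y'. \<exists>x\<in>T. R x y}" for Y' T
  have hallX: "\<forall>T\<subseteq>X. card T \<le> card (N Y T)" using less.prems unfolding N_def by simp
  have finN: "finite (N Y' T)" if "finite Y'" for Y' T using that unfolding N_def by simp
  show ?case
  proof (cases "X = {}")
    case True then show ?thesis by auto
  next
    case Xne: False
    show ?thesis
    proof (cases "\<exists>T. T \<subseteq> X \<and> T \<noteq> {} \<and> T \<noteq> X \<and> card (N Y T) \<le> card T")
      case True
      then obtain T where T: "T \<subseteq> X" "T \<noteq> {}" "T \<noteq> X" "card (N Y T) \<le> card T" by blast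
      have finT: "finite T" using T less.prems finite_subset by blast
      have c1: "card T < card X" using T less.prems(1) by (intro psubset_card_mono) auto
      have h1: "\<forall>S\<subseteq>T. card S \<le> card {y\<in>N Y T. \<exists>x\<in>S. R x y}"
      proof (intro allI impI)
        fix S assume S: "S \<subseteq> T"
        have "{y\<in>N Y T. \<exists>x\<in>S. R x y} = N Y S" using S unfolding N_def by blast
        then show "card S \<le> card {y\<in>N Y T. \<exists>x\<in>S. R x y}" using hallX S T by simp
      qed
      have "\<exists>f. inj_on f T \<and> (\<forall>x\<in>T. f x \<in> N Y T \<and> R x (f x))"
        by (rule less.hyps[of T "N Y T", OF c1 finT finN[OF less.prems(2)] h1])
      then obtain f1 where f1c: "inj_on f1 T \<and> (\<forall>x\<in>T. f1 x \<in> N Y T \<and> R x (f1 x))" ..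
      note f1 = conjunct1[OF f1c] conjunct2[OF f1c]
      have "X - T \<subset> X" using T by blast
      then have c2: "card (X - T) < card X" using less.prems(1) by (intro psubset_card_mono)
      have h2: "\<forall>S\<subseteq>X - T. card S \<le> card {y\<in>Y - N Y T. \<exists>x\<in>S. R x y}"
      proof (intro allI impI)
        fix S assume S: "S \<subseteq> X - T"
        have finS: "finite S" using S less.prems finite_subset by blast
        have e: "{y\<in>Y - N Y T. \<exists>x\<in>S. R x y} = N Y S - N Y T" unfolding N_def by blast
        have "N Y (S \<union> T) = (N Y S - N Y T) \<union> N Y T" unfolding N_def by blast
        moreover have "card ((N Y S - N Y T) \<union> N Y T) = card (N Y S - N Y T) + card (N Y T)"
          by (rule card_Un_disjoint) (use finN[OF less.prems(2)] in auto)
        ultimately have "card (N Y (S \<union> T)) = card (N Y S - N Y T) + card (N Y T)" by simp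
        moreover have "card (S \<union> T) = card S + card T"
          using S finS finT by (subst card_Un_disjoint) auto
        moreover have "S \<union> T \<subseteq> X" using S T by blast
        then have "card (S \<union> T) \<le> card (N Y (S \<union> T))" using hallX by blast
        ultimately show "card S \<le> card {y\<in>Y - N Y T. \<exists>x\<in>S. R x y}" using e T(4) by simp
      qed
      from less.hyps[OF c2 _ _ h2] less.prems
      obtain f2 where f2c: "inj_on f2 (X - T) \<and> (\<forall>x\<in>X - T. f2 x \<in> Y - N Y T \<and> R x (f2 x))" by auto
      note f2 = conjunct1[OF f2c] conjunct2[OF f2c]
      define f where "f x = (if x \<in> T then f1 x else f2 x)" for x
      have "inj_on f X"
      proof (rule inj_onI)
        fix x x' assume x: "x \<in> X" "x' \<in> X" "f x = f x'"
        show "x = x'"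
        proof (cases "x \<in> T"; cases "x' \<in> T")
          assume "x \<in> T" "x' \<in> T" then show ?thesis using x f1 unfolding f_def by (auto dest: inj_onD)
        next
          assume "x \<notin> T" "x' \<notin> T" then show ?thesis using x f2 unfolding f_def by (auto dest: inj_onD)
        next
          assume "x \<in> T" "x' \<notin> T" then show ?thesis using x f1 f2 unfolding f_def by force
        next
          assume "x \<notin> T" "x' \<in> T" then show ?thesis using x f1 f2 unfolding f_def by force
        qed
      qed
      moreover have "\<forall>x\<in>X. f x \<in> Y \<and> R x (f x)"
        using f1 f2 unfolding f_def N_def by auto
      ultimately show ?thesis by blast
    next
      case False
      have strict: "card T < card (N Y T)" if "T \<subseteq> X" "T \<noteq> {}" "T \<noteq> X" for T
      proof (rule ccontr)
        assume "\<not> ?thesis" then have "card (N Y T) \<le> card T" by simp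
        then show False using False that by blast
      qed
      obtain x0 where x0: "x0 \<in> X" using Xne by blast
      have "card {x0} \<le> card (N Y {x0})" using hallX x0 by blast
      then have "1 \<le> card (N Y {x0})" by simp
      then have "N Y {x0} \<noteq> {}" by auto
      then obtain y0 where y0: "y0 \<in> Y" "R x0 y0" unfolding N_def by blast
      have c: "card (X - {x0}) < card X" by (rule card_Diff1_less[OF less.prems(1) x0])
      have h: "\<forall>S\<subseteq>X - {x0}. card S \<le> card {y\<in>Y - {y0}. \<exists>x\<in>S. R x y}"
      proof (intro allI impI)
        fix S assume S: "S \<subseteq> X - {x0}"
        show "card S \<le> card {y\<in>Y - {y0}. \<exists>x\<in>S. R x y}"
        proof (cases "S = {}")
          case True then show ?thesis by simp
        next
          case False
          have "S \<noteq> X" using S x0 by blast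
          then have lt: "card S < card (N Y S)" using strict[of S] S False by blast
          have e: "{y\<in>Y - {y0}. \<exists>x\<in>S. R x y} = N Y S - {y0}" unfolding N_def by blast
          have "card (N Y S) - 1 \<le> card (N Y S - {y0})"
            using finN[OF less.prems(2)] by (simp add: card_Diff_singleton_if)
          then show ?thesis using e lt by simp
        qed
      qed
      from less.hyps[OF c _ _ h] less.prems
      obtain f' where fc: "inj_on f' (X - {x0}) \<and> (\<forall>x\<in>X - {x0}. f' x \<in> Y - {y0} \<and> R x (f' x))" by auto
      note f' = conjunct1[OF fc] conjunct2[OF fc]
      define f where "f = f'(x0 := y0)"
      have "inj_on f X"
      proof (rule inj_onI)
        fix x x' assume x: "x \<in> X" "x' \<in> X" "f x = f x'"
        show "x = x'"
        proof (cases "x = x0"; cases "x' = x0")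
          assume "x \<noteq> x0" "x' \<noteq> x0" then show ?thesis using x f' unfolding f_def by (auto dest: inj_onD)
        next
          assume "x = x0" "x' \<noteq> x0" then show ?thesis using x f' unfolding f_def by force
        next
          assume "x \<noteq> x0" "x' = x0" then show ?thesis using x f' unfolding f_def by force
        qed simp
      qed
      moreover have "\<forall>x\<in>X. f x \<in> Y \<and> R x (f x)"
        using f' y0 unfolding f_def by auto
      ultimately show ?thesis by blast
    qed
  qed
qed

lemma hball_facts:
  assumes "hball_bd K d G B"
  shows "simplicial_complex G" "has_dim G d" "hsphere K (d - 1) B" "B \<subseteq> G"
    "\<forall>F\<in>G. F \<notin> B \<longrightarrow> hsphere K (d - int (card F)) (link G F)"
    "\<forall>F\<in>B. F \<noteq> {} \<longrightarrow> (\<exists>B'. hball_bd K (d - int (card F)) (link G F) B')"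
  using assms by (cases rule: hball_bd.cases; simp)+

lemma ht_basic:
  assumes "homology_triangulation K \<Gamma> \<sigma> V"
  shows "finite V" "simplicial_complex \<Gamma>" "\<And>F. F \<in> \<Gamma> \<Longrightarrow> \<sigma> F \<subseteq> V"
  using assms unfolding homology_triangulation_def by auto

lemma ht_restr:
  assumes "homology_triangulation K \<Gamma> \<sigma> V" "U \<subseteq> V" "U \<noteq> {}"
  shows "\<exists>B. hball_bd K (int (card U) - 1) (restr \<Gamma> \<sigma> U) B \<and> restr \<Gamma> \<sigma> U - B = {F \<in> \<Gamma>. \<sigma> F = U}"
  using assms unfolding homology_triangulation_def by blast

lemma sc_finite_face: "simplicial_complex \<Delta> \<Longrightarrow> F \<in> \<Delta> \<Longrightarrow> finite F"
  unfolding simplicial_complex_def by blast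

lemma sc_sub: "simplicial_complex \<Delta> \<Longrightarrow> F \<in> \<Delta> \<Longrightarrow> G \<subseteq> F \<Longrightarrow> G \<in> \<Delta>"
  unfolding simplicial_complex_def by blast

lemma sc_finite: "simplicial_complex \<Delta> \<Longrightarrow> finite \<Delta>"
  unfolding simplicial_complex_def by blast

lemma ht_card_bound:
  assumes ht: "homology_triangulation K \<Gamma> \<sigma> V" and U: "U \<subseteq> V" "U \<noteq> {}"
    and F: "F \<in> restr \<Gamma> \<sigma> U"
  shows "card F \<le> card U"
proof -
  obtain B where "hball_bd K (int (card U) - 1) (restr \<Gamma> \<sigma> U) B" using ht_restr[OF ht U] by blast
  then have "has_dim (restr \<Gamma> \<sigma> U) (int (card U) - 1)" by (rule hball_facts)
  then show ?thesis using F unfolding has_dim_def by fastforce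
qed

lemma ht_sc_dim:
  assumes ht: "homology_triangulation K \<Gamma> \<sigma> V" and U: "U \<subseteq> V" "U \<noteq> {}"
  shows "sc_dim (restr \<Gamma> \<sigma> U) \<le> int (card U) - 1"
proof -
  have fin: "finite (restr \<Gamma> \<sigma> U)"
    using sc_finite[OF ht_basic(2)[OF ht]] unfolding restr_def by simp
  have "Max (insert 0 (card ` restr \<Gamma> \<sigma> U)) \<le> card U"
    using fin ht_card_bound[OF ht U] by (intro Max.boundedI) auto
  then show ?thesis unfolding sc_dim_def by simp
qed

lemma ht_sigma_ne:
  assumes ht: "homology_triangulation K \<Gamma> \<sigma> V" and V: "V \<noteq> {}" and F: "F \<in> \<Gamma>" "F \<noteq> {}"
  shows "\<sigma> F \<noteq> {}"
proof
  assume s: "\<sigma> F = {}"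
  obtain v where v: "v \<in> V" using V by blast
  obtain B where B: "hball_bd K (int (card {v}) - 1) (restr \<Gamma> \<sigma> {v}) B"
      and int: "restr \<Gamma> \<sigma> {v} - B = {F \<in> \<Gamma>. \<sigma> F = {v}}"
    using ht_restr[OF ht, of "{v}"] v by blast
  have "hsphere K (int (card {v}) - 1 - 1) B" using hball_facts(3)[OF B] .
  then have "has_dim B (-1)" unfolding hsphere_def by simp
  then have B0: "\<forall>G\<in>B. card G = 0" unfolding has_dim_def by fastforce
  have "finite F" using sc_finite_face[OF ht_basic(2)[OF ht] F(1)] .
  then have "card F \<noteq> 0" using F(2) by simp
  then have "F \<notin> B" using B0 by auto
  moreover have "F \<in> restr \<Gamma> \<sigma> {v}" using F s unfolding restr_def by simp
  ultimately have "\<sigma> F = {v}" using int by blast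
  then show False using s by simp
qed

lemma ht_mono:
  assumes ht: "homology_triangulation K \<Gamma> \<sigma> V" and V: "V \<noteq> {}" and F: "F \<in> \<Gamma>" and w: "w \<in> F"
  shows "\<sigma> {w} \<subseteq> \<sigma> F"
proof -
  have ne: "\<sigma> F \<noteq> {}" using ht_sigma_ne[OF ht V F] w by blast
  obtain B where B: "hball_bd K (int (card (\<sigma> F)) - 1) (restr \<Gamma> \<sigma> (\<sigma> F)) B"
    using ht_restr[OF ht ht_basic(3)[OF ht F] ne] by blast
  have sc: "simplicial_complex (restr \<Gamma> \<sigma> (\<sigma> F))" by (rule hball_facts(1)[OF B])
  have "F \<in> restr \<Gamma> \<sigma> (\<sigma> F)" using F unfolding restr_def by simp
  then have "{w} \<in> restr \<Gamma> \<sigma> (\<sigma> F)" using sc_sub[OF sc] w by blast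
  then show ?thesis unfolding restr_def by simp
qed

lemma ht_pure:
  assumes ht: "homology_triangulation K \<Gamma> \<sigma> V" and V: "V \<noteq> {}" and E: "E \<in> \<Gamma>"
  shows "\<exists>H\<in>\<Gamma>. E \<subseteq> H \<and> card H = card V"
proof -
  have sc: "simplicial_complex \<Gamma>" by (rule ht_basic(2)[OF ht])
  define C where "C = {F\<in>\<Gamma>. E \<subseteq> F}"
  have finC: "finite C" using sc_finite[OF sc] unfolding C_def by simp
  have neC: "C \<noteq> {}" using E unfolding C_def by blast
  obtain H where H: "H \<in> C" "card H = Max (card ` C)"
    using Max_in[of "card ` C"] finC neC by (metis (no_types, lifting) finite_imageI image_iff image_is_empty)
  have HG: "H \<in> \<Gamma>" "E \<subseteq> H" using H C_def by auto
  have maxH: "card F \<le> card H" if "F \<in> C" for F using H finC that by simp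
  have finH: "finite H" using sc_finite_face[OF sc HG(1)] .
  have lk: "link \<Gamma> H = {{}}"
  proof
    show "link \<Gamma> H \<subseteq> {{}}"
    proof
      fix G assume G: "G \<in> link \<Gamma> H"
      then have GH: "G \<inter> H = {}" "G \<union> H \<in> \<Gamma>" unfolding link_def by auto
      then have "G \<union> H \<in> C" using HG unfolding C_def by blast
      then have "card (G \<union> H) \<le> card H" by (rule maxH)
      moreover have "finite (G \<union> H)" using sc_finite_face[OF sc GH(2)] .
      ultimately have "G \<union> H = H" using card_subset_eq[of "G \<union> H" H] by (metis card_seteq sup_ge2)
      then show "G \<in> {{}}" using GH by blast
    qed
    show "{{}} \<subseteq> link \<Gamma> H"
      using HG sc_sub[OF sc HG(1), of "{}"] unfolding link_def by auto
  qed
  have rV: "restr \<Gamma> \<sigma> V = \<Gamma>" using ht_basic(3)[OF ht] unfolding restr_def by auto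
  obtain B where B: "hball_bd K (int (card V) - 1) \<Gamma> B"
    using ht_restr[OF ht order_refl V] rV by auto
  have "card H = card V"
  proof (cases "H \<in> B")
    case False
    then have "hsphere K (int (card V) - 1 - int (card H)) (link \<Gamma> H)" using hball_facts(5)[OF B] HG by blast
    then have "has_dim (link \<Gamma> H) (int (card V) - 1 - int (card H))" unfolding hsphere_def by blast
    then show ?thesis unfolding lk has_dim_def by simp
  next
    case True
    show ?thesis
    proof (cases "H = {}")
      case False
      then obtain B' where "hball_bd K (int (card V) - 1 - int (card H)) (link \<Gamma> H) B'"
        using hball_facts(6)[OF B] True by blast
      then have "has_dim (link \<Gamma> H) (int (card V) - 1 - int (card H))" by (rule hball_facts(2))
      then show ?thesis unfolding lk has_dim_def by simp
    next
      case Hemp: True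
      have "has_dim \<Gamma> (int (card V) - 1)" by (rule hball_facts(2)[OF B])
      then obtain F where F: "F \<in> \<Gamma>" "int (card F) = int (card V)" unfolding has_dim_def by auto
      have "E = {}" using HG Hemp by simp
      then have "F \<in> C" using F unfolding C_def by simp
      then have "card F \<le> 0" using maxH Hemp by fastforce
      moreover have "card V > 0" using V ht_basic(1)[OF ht] by (simp add: card_gt_0_iff)
      ultimately show ?thesis using F by simp
    qed
  qed
  then show ?thesis using HG by blast
qed

lemma hall_app:
  assumes ht: "homology_triangulation K \<Gamma> \<sigma> V" and V: "V \<noteq> {}" and qg: "quasi_geometric \<Gamma> \<sigma> V"
    and E: "E \<in> \<Gamma>" and H: "H \<in> \<Gamma>" "E \<subseteq> H" "card H = card V"
  shows "\<exists>f. inj_on f (V - \<sigma> E) \<and> (\<forall>v\<in>V - \<sigma> E. f v \<in> H - E \<and> v \<in> \<sigma> {f v})"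
proof -
  have sc: "simplicial_complex \<Gamma>" by (rule ht_basic(2)[OF ht])
  have finV: "finite V" by (rule ht_basic(1)[OF ht])
  have finH: "finite H" by (rule sc_finite_face[OF sc H(1)])
  have hc: "\<forall>T\<subseteq>V - \<sigma> E. card T \<le> card {w\<in>H - E. \<exists>v\<in>T. v \<in> \<sigma> {w}}"
  proof (intro allI impI)
    fix T assume T: "T \<subseteq> V - \<sigma> E"
    define NT where "NT = {w\<in>H - E. \<exists>v\<in>T. v \<in> \<sigma> {w}}"
    define W' where "W' = H - NT"
    have NTH: "NT \<subseteq> H" unfolding NT_def by blast
    have W'G: "W' \<in> \<Gamma>" using sc_sub[OF sc H(1)] unfolding W'_def by blast
    have sw: "\<sigma> {w} \<subseteq> V - T" if w: "w \<in> W'" for w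
    proof -
      have wH: "w \<in> H" using w W'_def by blast
      have "{w} \<in> \<Gamma>" using sc_sub[OF sc H(1)] wH by blast
      then have sV: "\<sigma> {w} \<subseteq> V" by (rule ht_basic(3)[OF ht])
      show ?thesis
      proof (cases "w \<in> E")
        case True
        then have "\<sigma> {w} \<subseteq> \<sigma> E" by (rule ht_mono[OF ht V E])
        then show ?thesis using sV T by blast
      next
        case False
        then have "\<forall>v\<in>T. v \<notin> \<sigma> {w}" using w wH unfolding W'_def NT_def by blast
        then show ?thesis using sV by blast
      qed
    qed
    have cNT: "card NT \<le> card H" using NTH finH by (rule card_mono[rotated])
    have cT: "card T \<le> card V" using T finV by (intro card_mono) auto
    show "card T \<le> card NT"
    proof (cases "W' = {}")
      case True
      then have "H \<subseteq> NT" unfolding W'_def by blast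
      then have "card H \<le> card NT" using finH NTH by (intro card_mono) (auto intro: finite_subset)
      then show ?thesis using cT H(3) by simp
    next
      case False
      then obtain w where w: "w \<in> W'" by blast
      have "{w} \<in> \<Gamma>" using sc_sub[OF sc W'G] w by blast
      then have "\<sigma> {w} \<noteq> {}" by (rule ht_sigma_ne[OF ht V]) simp
      then have Une: "V - T \<noteq> {}" using sw[OF w] by blast
      have "\<not> (sc_dim (restr \<Gamma> \<sigma> (V - T)) < int (card W') - 1)"
        using qg W'G sw unfolding quasi_geometric_def by blast
      moreover have "sc_dim (restr \<Gamma> \<sigma> (V - T)) \<le> int (card (V - T)) - 1"
        by (rule ht_sc_dim[OF ht _ Une]) blast
      ultimately have "card W' \<le> card (V - T)" by simp
      moreover have "card W' = card H - card NT" unfolding W'_def using NTH finH by (simp add: card_Diff_subset finite_subset)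
      moreover have "card (V - T) = card V - card T"
      proof -
        have "T \<subseteq> V" using T by blast
        then show ?thesis using finV by (intro card_Diff_subset) (auto intro: finite_subset)
      qed
      ultimately show ?thesis using cNT cT H(3) by simp
    qed
  qed
  have "finite (V - \<sigma> E)" "finite (H - E)" using finV finH by auto
  from hall[OF this hc] show ?thesis by blast
qed

lemma spans_indicators:
  fixes G :: "'w set"
  assumes fin: "finite S" and ind: "\<forall>u\<in>G. (\<lambda>w. if w = u then (1::'k::field) else 0) \<in> S"
  shows "spans G S"
  unfolding spans_def
proof
  fix g :: "'w \<Rightarrow> 'k"
  define c where "c \<phi> = (if \<exists>u\<in>G. \<phi> = (\<lambda>w. if w = u then 1 else 0) then g (SOME u. u \<in> G \<and> \<phi> = (\<lambda>w. if w = u then 1 else 0)) else 0)" for \<phi> :: "'w \<Rightarrow> 'k"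
  have "\<forall>w\<in>G. g w = (\<Sum>\<phi>\<in>S. c \<phi> * \<phi> w)"
  proof
    fix w assume w: "w \<in> G"
    define iw where "iw = (\<lambda>x. if x = w then (1::'k) else 0)"
    have iwS: "iw \<in> S" using ind w iw_def by blast
    have ciw: "c iw = g w"
    proof -
      have ex: "\<exists>u\<in>G. iw = (\<lambda>x. if x = u then 1 else 0)" using w iw_def by blast
      have "(SOME u. u \<in> G \<and> iw = (\<lambda>x. if x = u then 1 else 0)) = w"
      proof (rule some_equality)
        show "w \<in> G \<and> iw = (\<lambda>x. if x = w then 1 else 0)" using w iw_def by simp
      next
        fix u assume "u \<in> G \<and> iw = (\<lambda>x. if x = u then 1 else 0)"
        then have "iw w = (if w = u then 1 else 0)" by simp
        then show "u = w" unfolding iw_def by (cases "w = u") auto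
      qed
      then show ?thesis unfolding c_def using ex by simp
    qed
    have rest: "c \<phi> * \<phi> w = 0" if "\<phi> \<in> S - {iw}" for \<phi>
    proof (cases "\<exists>u\<in>G. \<phi> = (\<lambda>x. if x = u then 1 else 0)")
      case True
      then obtain u where u: "u \<in> G" "\<phi> = (\<lambda>x. if x = u then 1 else 0)" by blast
      then have "u \<noteq> w" using that iw_def by auto
      then show ?thesis using u by simp
    next
      case False then show ?thesis unfolding c_def by simp
    qed
    have "(\<Sum>\<phi>\<in>S. c \<phi> * \<phi> w) = c iw * iw w + (\<Sum>\<phi>\<in>S - {iw}. c \<phi> * \<phi> w)"
      using fin iwS by (simp add: sum.remove)
    also have "(\<Sum>\<phi>\<in>S - {iw}. c \<phi> * \<phi> w) = 0" by (rule sum.neutral) (use rest in blast)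
    finally show "g w = (\<Sum>\<phi>\<in>S. c \<phi> * \<phi> w)" using ciw iw_def by simp
  qed
  then show "\<exists>c. \<forall>w\<in>G. g w = (\<Sum>\<phi>\<in>S. c \<phi> * \<phi> w)" by (rule exI[of _ c])
qed

lemma spans_subset: "spans G S \<Longrightarrow> G' \<subseteq> G \<Longrightarrow> spans G' S"
  unfolding spans_def by blast

theorem proposition2p4:
  fixes \<Gamma> :: "'w::linorder set set" and \<sigma> :: "'w set \<Rightarrow> 'v set" and V :: "'v set"
    and E :: "'w set"
  assumes "infinite (UNIV :: 'k::field set)"
    and "V \<noteq> {}"
    and "homology_triangulation TYPE('k) \<Gamma> \<sigma> V"
    and "quasi_geometric \<Gamma> \<sigma> V"
    and "E \<in> \<Gamma>"
  shows "\<exists>\<theta>s :: ('w \<Rightarrow> 'k) list. special_lsop \<Gamma> \<sigma> V E \<theta>s"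
proof -
  note inf = assms(1) and V = assms(2) and ht = assms(3) and qg = assms(4) and E = assms(5)
  have sc: "simplicial_complex \<Gamma>" by (rule ht_basic(2)[OF ht])
  have finV: "finite V" by (rule ht_basic(1)[OF ht])
  define \<Delta> where "\<Delta> = link \<Gamma> E"
  define W where "W = vertices \<Delta>"
  define m where "m = card V - card E"
  define X where "X = V - \<sigma> E"
  have \<Delta>sub: "\<Delta> \<subseteq> \<Gamma>" unfolding \<Delta>_def link_def by blast
  have fin\<Delta>: "finite \<Delta>" using sc_finite[OF sc] \<Delta>sub finite_subset by blast
  have finW: "finite W" unfolding W_def vertices_def
    using fin\<Delta> \<Delta>sub sc_finite_face[OF sc] by blast
  have inW: "G \<in> \<Delta> \<Longrightarrow> G \<subseteq> W" for G unfolding W_def vertices_def by blast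
  have finX: "finite X" using finV X_def by simp
  obtain xs where xs: "set xs = X" "distinct xs" using finite_distinct_list[OF finX] by blast
  define r where "r = length xs"
  have rX: "r = card X" using distinct_card[OF xs(2)] xs(1) r_def by simp
  have facet: "H - E \<in> \<Delta>" if "H \<in> \<Gamma>" "E \<subseteq> H" for H
  proof -
    have "H - E \<in> \<Gamma>" using sc_sub[OF sc that(1)] by blast
    moreover have "(H - E) \<union> E = H" using that by blast
    ultimately show ?thesis unfolding \<Delta>_def link_def using that by auto
  qed
  obtain H0 where H0: "H0 \<in> \<Gamma>" "E \<subseteq> H0" "card H0 = card V" using ht_pure[OF ht V E] by blast
  have finH0: "finite H0" by (rule sc_finite_face[OF sc H0(1)])
  obtain f0 where f0: "inj_on f0 X" "\<forall>v\<in>X. f0 v \<in> H0 - E \<and> v \<in> \<sigma> {f0 v}"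
    using hall_app[OF ht V qg E H0] X_def by blast
  have cardHE: "card (H - E) = m" if "H \<in> \<Gamma>" "E \<subseteq> H" "card H = card V" for H
  proof -
    have "finite H" by (rule sc_finite_face[OF sc that(1)])
    then show ?thesis using that m_def by (simp add: card_Diff_subset finite_subset)
  qed
  have rm: "r \<le> m"
  proof -
    have "card (f0 ` X) \<le> card (H0 - E)" using f0 finH0 by (intro card_mono) auto
    then show ?thesis using card_image[OF f0(1)] rX cardHE[OF H0] by simp
  qed
  define ind where "ind u = (\<lambda>w::'w. if w = u then (1::'k) else 0)" for u
  define A where "A j = (if j < r then {\<phi>::'w \<Rightarrow> 'k. \<forall>w. \<phi> w \<noteq> 0 \<longrightarrow> w \<in> W \<and> xs!j \<in> \<sigma> {w}}
                               else {\<phi>. \<forall>w. \<phi> w \<noteq> 0 \<longrightarrow> w \<in> W})" for j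
  have subs: "\<forall>j<m. subsp (A j)"
  proof (intro allI impI)
    fix j
    have a: "subsp {\<phi>::'w \<Rightarrow> 'k. \<forall>w. \<phi> w \<noteq> 0 \<longrightarrow> P w}" for P
    proof -
      define S where "S = {\<phi>::'w \<Rightarrow> 'k. \<forall>w. \<phi> w \<noteq> 0 \<longrightarrow> P w}"
      have z: "(\<lambda>_. 0) \<in> S" unfolding S_def by simp
      have ad: "(\<lambda>w. x w + y w) \<in> S" if "x \<in> S" "y \<in> S" for x y
      proof -
        have "x w + y w \<noteq> 0 \<Longrightarrow> P w" for w
        proof -
          assume "x w + y w \<noteq> 0"
          then have "x w \<noteq> 0 \<or> y w \<noteq> 0" by auto
          then show "P w" using that unfolding S_def by auto
        qed
        then show ?thesis unfolding S_def by simp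
      qed
      have sm: "(\<lambda>w. a * x w) \<in> S" if "x \<in> S" for a x
        using that unfolding S_def by simp
      show ?thesis unfolding subsp_def S_def[symmetric] using z ad sm by blast
    qed
    show "subsp (A j)" unfolding A_def using a[of "\<lambda>w. w \<in> W \<and> xs!j \<in> \<sigma> {w}"] a[of "\<lambda>w. w \<in> W"] by simp
  qed
  have indA: "ind u \<in> A j" if "u \<in> W" "j < r \<longrightarrow> xs!j \<in> \<sigma> {u}" for u j
    using that unfolding A_def ind_def by auto
  have nz: "\<forall>j<r. \<exists>y\<in>A j. y \<noteq> (\<lambda>_. 0)"
  proof (intro allI impI)
    fix j assume j: "j < r"
    have xX: "xs!j \<in> X" using nth_mem[of j xs] j r_def xs(1) by simp
    then have "f0 (xs!j) \<in> H0 - E" "xs!j \<in> \<sigma> {f0 (xs!j)}" using f0 by auto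
    moreover have "H0 - E \<subseteq> W" using inW facet[OF H0(1,2)] by blast
    ultimately have "ind (f0 (xs!j)) \<in> A j" using indA by blast
    moreover have "ind (f0 (xs!j)) \<noteq> (\<lambda>_. 0)" unfolding ind_def by (auto simp: fun_eq_iff)
    ultimately show "\<exists>y\<in>A j. y \<noteq> (\<lambda>_. 0)" by blast
  qed
  have base: "\<forall>G\<in>\<Delta>. \<exists>L. length L = m \<and> (\<forall>j<m. L!j \<in> A j) \<and> spans G (set L)"
  proof
    fix G assume G: "G \<in> \<Delta>"
    then have GE: "G \<union> E \<in> \<Gamma>" "G \<inter> E = {}" unfolding \<Delta>_def link_def by auto
    obtain H where H: "H \<in> \<Gamma>" "G \<union> E \<subseteq> H" "card H = card V" using ht_pure[OF ht V GE(1)] by blast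
    have HE: "E \<subseteq> H" using H by blast
    have finH: "finite H" by (rule sc_finite_face[OF sc H(1)])
    obtain f where f: "inj_on f X" "\<forall>v\<in>X. f v \<in> H - E \<and> v \<in> \<sigma> {f v}"
      using hall_app[OF ht V qg E H(1) HE H(3)] X_def by blast
    define G0 where "G0 = H - E"
    have G0W: "G0 \<subseteq> W" using inW facet[OF H(1) HE] G0_def by blast
    have GG0: "G \<subseteq> G0" using H GE G0_def by blast
    have fX: "f ` X \<subseteq> G0" using f G0_def by auto
    obtain ys where ys: "set ys = G0 - f ` X" "distinct ys"
      using finite_distinct_list[of "G0 - f ` X"] finH G0_def by auto
    have lys: "length ys = m - r"
    proof -
      have "length ys = card (G0 - f ` X)" using distinct_card[OF ys(2)] ys(1) by simp
      also have "\<dots> = card G0 - card (f ` X)" using fX finH G0_def by (simp add: card_Diff_subset finite_subset)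
      also have "card (f ` X) = r" using card_image[OF f(1)] rX by simp
      also have "card G0 = m" using cardHE[OF H(1) HE H(3)] G0_def by simp
      finally show ?thesis .
    qed
    define L where "L = map (\<lambda>x. ind (f x)) xs @ map ind ys"
    show "\<exists>L. length L = m \<and> (\<forall>j<m. L!j \<in> A j) \<and> spans G (set L)"
    proof (rule exI[of _ L], intro conjI allI impI)
      show "length L = m" using lys rm r_def L_def by simp
    next
      fix j assume j: "j < m"
      show "L!j \<in> A j"
      proof (cases "j < r")
        case True
        then have "L!j = ind (f (xs!j))" using r_def L_def by (simp add: nth_append)
        moreover have "xs!j \<in> X" using nth_mem[of j xs] True r_def xs(1) by simp
        ultimately show ?thesis using f G0W G0_def indA by auto
      next
        case False
        moreover have "j - r < length ys" using lys j False by simp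
        ultimately have "L!j = ind (ys!(j - r))" using r_def L_def by (simp add: nth_append)
        moreover have "ys!(j - r) \<in> set ys" using lys j False by simp
        ultimately show ?thesis using ys G0W indA False by auto
      qed
    next
      have "\<forall>u\<in>G0. ind u \<in> set L"
      proof
        fix u assume u: "u \<in> G0"
        show "ind u \<in> set L"
        proof (cases "u \<in> f ` X")
          case True
          then obtain x where "x \<in> set xs" "u = f x" using xs by blast
          then show ?thesis unfolding L_def by auto
        next
          case False
          then have "u \<in> set ys" using ys u by blast
          then show ?thesis unfolding L_def by auto
        qed
      qed
      then have "spans G0 (set L)" unfolding ind_def by (intro spans_indicators) auto
      then show "spans G (set L)" using GG0 by (rule spans_subset)
    qed
  qed
  obtain \<theta>s where len: "length \<theta>s = m" and thA: "\<forall>j<m. \<theta>s!j \<in> A j"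
     and dist: "\<forall>j<r. \<forall>j'<r. \<theta>s!j = \<theta>s!j' \<longrightarrow> j = j'" and sp: "\<forall>G\<in>\<Delta>. spans G (set \<theta>s)"
    using greedy[OF inf fin\<Delta> subs rm nz base] by blast
  have lsop: "lsop (card V - card E) (link \<Gamma> E) \<theta>s"
    unfolding lsop_def
  proof (intro conjI ballI allI impI)
    show "length \<theta>s = card V - card E" using len m_def by simp
  next
    fix \<theta> w assume th: "\<theta> \<in> set \<theta>s" and w: "w \<notin> vertices (link \<Gamma> E)"
    obtain j where j: "j < m" "\<theta> = \<theta>s!j" using th len in_set_conv_nth[of \<theta> \<theta>s] by auto
    then have "\<theta> \<in> A j" using thA by simp
    then show "\<theta> w = 0" using w W_def \<Delta>_def unfolding A_def by (auto split: if_splits)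
  next
    show "finite_quotient (link \<Gamma> E) \<theta>s"
      using fq_from_span[of "link \<Gamma> E" \<theta>s] finW sp W_def \<Delta>_def unfolding spans_def by simp
  qed
  define jx where "jx v = (SOME j. j < r \<and> xs!j = v)" for v
  have jx: "jx v < r \<and> xs!(jx v) = v" if "v \<in> X" for v
  proof -
    have "\<exists>j. j < r \<and> xs!j = v" using that xs(1) r_def in_set_conv_nth[of v xs] by auto
    then show ?thesis unfolding jx_def by (rule someI_ex)
  qed
  define \<theta>v where "\<theta>v v = \<theta>s ! (jx v)" for v
  have "\<forall>v\<in>V - \<sigma> E. \<theta>v v \<in> set \<theta>s \<and> supp (\<theta>v v) \<subseteq> {w \<in> vertices (link \<Gamma> E). v \<in> \<sigma> {w}}"
  proof
    fix v assume "v \<in> V - \<sigma> E"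
    then have v: "jx v < r" "xs!(jx v) = v" using jx X_def by auto
    then have jm: "jx v < m" using rm by simp
    then show "\<theta>v v \<in> set \<theta>s \<and> supp (\<theta>v v) \<subseteq> {w \<in> vertices (link \<Gamma> E). v \<in> \<sigma> {w}}"
      using thA v len unfolding \<theta>v_def supp_def A_def W_def \<Delta>_def by auto
  qed
  moreover have "inj_on \<theta>v (V - \<sigma> E)"
  proof (rule inj_onI)
    fix v v' assume "v \<in> V - \<sigma> E" "v' \<in> V - \<sigma> E" "\<theta>v v = \<theta>v v'"
    then have a: "v \<in> X" "v' \<in> X" "\<theta>s ! jx v = \<theta>s ! jx v'" unfolding X_def \<theta>v_def by auto
    then have "jx v = jx v'" using jx[of v] jx[of v'] dist by blast
    then show "v = v'" using jx[OF a(1)] jx[OF a(2)] by metis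
  qed
  ultimately show ?thesis unfolding special_lsop_def using lsop by blast
qed

end
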